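(* Let $K$ be a number field, let $H_1,\dots,H_4\subset\mathbb{P}^3_K$ be planes over $K$ in general position, and suppose $p$ is the $K$-rational point $H_i\cap H_j\cap H_k$ for some distinct $i,j,k\in\{1,2,3,4\}$. Let $L_1,\dots,L_r$ be lines over $K$ all passing through $p$, and let $D=H_1\cup H_2\cup H_3\cup H_4\cup L_1\cup\dots\cup L_r$. Then the integral points on $\mathbb{P}^3_K\setminus D$ are potentially dense. *)

theory Defs
  imports Complex_Main "HOL-Computational_Algebra.Polynomial"
begin

definition subfield_C :: "complex set \<Rightarrow> bool" where
  "subfield_C K \<longleftrightarrow> 0 \<in> K \<and> 1 \<in> K \<and>
     (\<forall>x\<in>K. \<forall>y\<in>K. x + y \<in> K \<and> x - y \<in> K \<and> x * y \<in> K) \<and>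
     (\<forall>x\<in>K. x \<noteq> 0 \<longrightarrow> inverse x \<in> K)"

definition number_field :: "complex set \<Rightarrow> bool" where
  "number_field K \<longleftrightarrow> subfield_C K \<and>
     (\<exists>B. finite B \<and> B \<subseteq> K \<and>
        (\<forall>x\<in>K. \<exists>c. (\<forall>b\<in>B. c b \<in> \<rat>) \<and> x = (\<Sum>b\<in>B. c b * b)))"

text \<open>The ring of S-integers O_{L,S}, where S consists of the archimedean places
and the places above the primes dividing N.  Every finite set of places is contained
in such an S, so quantifying over N is the same as quantifying over S.\<close>

definition S_integers :: "complex set \<Rightarrow> nat \<Rightarrow> complex set" where
  "S_integers L N = {x \<in> L. \<exists>k::nat. algebraic_int (of_nat N ^ k * x)}"

definition S_unit :: "complex set \<Rightarrow> nat \<Rightarrow> complex \<Rightarrow> bool" where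
  "S_unit L N x \<longleftrightarrow> x \<in> S_integers L N \<and> x \<noteq> 0 \<and> inverse x \<in> S_integers L N"

definition lin :: "(nat \<Rightarrow> complex) \<Rightarrow> (nat \<Rightarrow> complex) \<Rightarrow> complex" where
  "lin h x = (\<Sum>j<4. h j * x j)"

definition coeffs_in :: "complex set \<Rightarrow> (nat \<Rightarrow> complex) \<Rightarrow> bool" where
  "coeffs_in K h \<longleftrightarrow> (\<forall>j<4. h j \<in> K)"

definition general_position4 :: "(nat \<Rightarrow> nat \<Rightarrow> complex) \<Rightarrow> bool" where
  "general_position4 h \<longleftrightarrow>
     (\<forall>c. (\<forall>j<4. (\<Sum>i<4. c i * h i j) = 0) \<longrightarrow> (\<forall>i<4. c i = 0))"

definition lin_indep2 :: "(nat \<Rightarrow> complex) \<Rightarrow> (nat \<Rightarrow> complex) \<Rightarrow> bool" where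
  "lin_indep2 u v \<longleftrightarrow> (\<forall>a b. (\<forall>j<4. a * u j + b * v j = 0) \<longrightarrow> a = 0 \<and> b = 0)"

text \<open>(D,S)-integral points of P^3 \ D, where D = H_1 \<union> .. \<union> H_4 \<union> L_1 \<union> .. \<union> L_r,
H_i = {h i = 0}, L_l = {g1 l = 0, g2 l = 0}, with respect to the model over O_{L,S}
given by these equations.  A point is represented by a coordinate vector x over
O_{L,S} that is unimodular (its coordinates generate the unit ideal); it is integral
iff its reduction modulo every prime of O_{L,S} avoids D, i.e. each h i (x) is an
S-unit and, for each line, g1 l (x), g2 l (x) generate the unit ideal.\<close>

definition integral_point ::
  "complex set \<Rightarrow> nat \<Rightarrow> (nat \<Rightarrow> nat \<Rightarrow> complex) \<Rightarrow> nat \<Rightarrow>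
   (nat \<Rightarrow> nat \<Rightarrow> complex) \<Rightarrow> (nat \<Rightarrow> nat \<Rightarrow> complex) \<Rightarrow> (nat \<Rightarrow> complex) \<Rightarrow> bool" where
  "integral_point L N h r g1 g2 x \<longleftrightarrow>
     (\<forall>j<4. x j \<in> S_integers L N) \<and>
     (\<exists>a. (\<forall>j<4. a j \<in> S_integers L N) \<and> (\<Sum>j<4. a j * x j) = 1) \<and>
     (\<forall>i<4. S_unit L N (lin (h i) x)) \<and>
     (\<forall>l<r. \<exists>a\<in>S_integers L N. \<exists>b\<in>S_integers L N.
         a * lin (g1 l) x + b * lin (g2 l) x = 1)"

definition monomials :: "nat \<Rightarrow> (nat \<Rightarrow> nat) set" where
  "monomials d = {\<alpha>. (\<forall>j\<ge>4. \<alpha> j = 0) \<and> (\<Sum>j<4. \<alpha> j) = d}"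

definition hpoly_eval :: "nat \<Rightarrow> ((nat \<Rightarrow> nat) \<Rightarrow> complex) \<Rightarrow> (nat \<Rightarrow> complex) \<Rightarrow> complex" where
  "hpoly_eval d c x = (\<Sum>\<alpha>\<in>monomials d. c \<alpha> * (\<Prod>j<4. x j ^ \<alpha> j))"

definition zariski_dense_P3 :: "(nat \<Rightarrow> complex) set \<Rightarrow> bool" where
  "zariski_dense_P3 A \<longleftrightarrow>
     (\<forall>d c. (\<forall>x\<in>A. hpoly_eval d c x = 0) \<longrightarrow> (\<forall>\<alpha>\<in>monomials d. c \<alpha> = 0))"

text \<open>Potential density: after a finite extension L of K and enlarging S (all
coefficients of the model becoming S-integral), the integral points are Zariski dense.\<close>

definition potentially_dense ::
  "complex set \<Rightarrow> (nat \<Rightarrow> nat \<Rightarrow> complex) \<Rightarrow> nat \<Rightarrow>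
   (nat \<Rightarrow> nat \<Rightarrow> complex) \<Rightarrow> (nat \<Rightarrow> nat \<Rightarrow> complex) \<Rightarrow> bool" where
  "potentially_dense K h r g1 g2 \<longleftrightarrow>
     (\<exists>L N. number_field L \<and> K \<subseteq> L \<and> N \<ge> 1 \<and>
        (\<forall>i<4. coeffs_in (S_integers L N) (h i)) \<and>
        (\<forall>l<r. coeffs_in (S_integers L N) (g1 l) \<and> coeffs_in (S_integers L N) (g2 l)) \<and>
        zariski_dense_P3 {x. integral_point L N h r g1 g2 x})"

end

theory Submission
  imports Defs "Jordan_Normal_Form.Char_Poly"
begin

inductive_set zspan :: "complex set \<Rightarrow> complex set" for S where
  zspan_0: "0 \<in> zspan S"
| zspan_base: "s \<in> S \<Longrightarrow> s \<in> zspan S"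
| zspan_add: "x \<in> zspan S \<Longrightarrow> y \<in> zspan S \<Longrightarrow> x + y \<in> zspan S"
| zspan_neg: "x \<in> zspan S \<Longrightarrow> -x \<in> zspan S"

lemma zspan_of_nat_mult: "x \<in> zspan S \<Longrightarrow> of_nat k * x \<in> zspan S"
  by (induction k) (auto simp: distrib_right intro: zspan.intros)

lemma zspan_of_int_mult: "x \<in> zspan S \<Longrightarrow> of_int k * x \<in> zspan S"
proof (cases "k \<ge> 0")
  case True
  assume x: "x \<in> zspan S"
  from True obtain m where "k = int m" using nonneg_int_cases by blast
  then show ?thesis using zspan_of_nat_mult[OF x, of m] by simp
next
  case False
  assume x: "x \<in> zspan S"
  from False obtain m where "k = - int m" using nonneg_int_cases[of "-k"] by (metis minus_minus neg_0_le_iff_le linear)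
  then show ?thesis using zspan_neg[OF zspan_of_nat_mult[OF x, of m]] by simp
qed

lemma zspan_Ints_mult: "c \<in> \<int> \<Longrightarrow> x \<in> zspan S \<Longrightarrow> c * x \<in> zspan S"
  by (auto elim!: Ints_cases intro: zspan_of_int_mult)

lemma zspan_sum: "finite I \<Longrightarrow> (\<And>i. i \<in> I \<Longrightarrow> f i \<in> zspan S) \<Longrightarrow> sum f I \<in> zspan S"
  by (induction I rule: finite_induct) (auto intro: zspan.intros)

lemma zspan_mult_closed:
  assumes "x \<in> zspan S" and "\<And>s. s \<in> S \<Longrightarrow> a * s \<in> zspan T"
  shows "a * x \<in> zspan T"
  using assms(1)
  by (induction rule: zspan.induct)
     (auto simp: distrib_left intro: zspan.intros assms(2))

lemma zspan_coeffs:
  assumes "finite S" "x \<in> zspan S"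
  shows "\<exists>c::complex \<Rightarrow> int. x = (\<Sum>s\<in>S. of_int (c s) * s)"
  using assms(2)
proof (induction rule: zspan.induct)
  case zspan_0
  show ?case by (rule exI[of _ "\<lambda>_. 0"]) simp
next
  case (zspan_base s)
  have "(\<Sum>t\<in>S. of_int (if t = s then 1 else 0) * t) = (\<Sum>t\<in>S. if t = s then t else 0)"
    by (rule sum.cong) auto
  also have "\<dots> = s" using zspan_base assms(1) by (simp add: sum.delta)
  finally show ?case by (intro exI[of _ "\<lambda>t. if t = s then 1 else 0"]) simp
next
  case (zspan_add x y)
  then obtain c d where "x = (\<Sum>s\<in>S. of_int (c s) * s)" "y = (\<Sum>s\<in>S. of_int (d s) * s)" by blast
  then show ?case
    by (intro exI[of _ "\<lambda>s. c s + d s"]) (simp add: distrib_right sum.distrib)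
next
  case (zspan_neg x)
  then obtain c where "x = (\<Sum>s\<in>S. of_int (c s) * s)" by blast
  then show ?case
    by (intro exI[of _ "\<lambda>s. - c s"]) (simp add: sum_negf)
qed

lemma sum_distinct_list_nth:
  assumes "distinct vs"
  shows "(\<Sum>s\<in>set vs. f s) = (\<Sum>j<length vs. f (vs ! j))"
proof -
  have "(\<Sum>s\<in>set vs. f s) = sum_list (map f vs)"
    using assms by (simp add: sum.distinct_set_conv_list)
  also have "\<dots> = (\<Sum>j<length vs. f (vs ! j))"
    by (simp add: sum_list_sum_nth atLeast0LessThan)
  finally show ?thesis .
qed

lemma mod_crit:
  assumes fin: "finite S" and one: "1 \<in> S" and cl: "\<And>s. s \<in> S \<Longrightarrow> a * s \<in> zspan S"
  shows "algebraic_int a"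
proof -
  obtain vs where vs: "distinct vs" "set vs = S" using finite_distinct_list[OF fin] by blast
  define n where "n = length vs"
  have "\<forall>s\<in>S. \<exists>c::complex \<Rightarrow> int. a * s = (\<Sum>t\<in>S. of_int (c t) * t)"
    using zspan_coeffs[OF fin] cl by blast
  then obtain C where C: "\<And>s. s \<in> S \<Longrightarrow> a * s = (\<Sum>t\<in>S. of_int (C s t) * t)"
    by metis
  define A :: "int mat" where "A = mat n n (\<lambda>(i,j). C (vs ! i) (vs ! j))"
  define Ac :: "complex mat" where "Ac = map_mat of_int A"
  define v :: "complex vec" where "v = vec n (\<lambda>j. vs ! j)"
  have A: "A \<in> carrier_mat n n" by (simp add: A_def)
  have Ac: "Ac \<in> carrier_mat n n" by (simp add: Ac_def A_def)
  have "Ac *\<^sub>v v = a \<cdot>\<^sub>v v"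
  proof (rule eq_vecI)
    fix i assume i: "i < dim_vec (a \<cdot>\<^sub>v v)"
    then have i': "i < n" by (simp add: v_def)
    have "(Ac *\<^sub>v v) $ i = (\<Sum>j<n. of_int (C (vs ! i) (vs ! j)) * vs ! j)"
      using i' by (simp add: Ac_def A_def v_def mult_mat_vec_def scalar_prod_def atLeast0LessThan)
    also have "\<dots> = (\<Sum>t\<in>S. of_int (C (vs ! i) t) * t)"
      using sum_distinct_list_nth[OF vs(1), of "\<lambda>t. of_int (C (vs ! i) t) * t"] vs(2) n_def by simp
    also have "\<dots> = a * vs ! i" using C[of "vs ! i"] i' vs n_def by auto
    finally show "(Ac *\<^sub>v v) $ i = (a \<cdot>\<^sub>v v) $ i" using i' by (simp add: v_def)
  qed (simp add: Ac_def A_def v_def)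
  moreover have "v \<noteq> 0\<^sub>v n"
  proof
    assume "v = 0\<^sub>v n"
    obtain j where "j < n" "vs ! j = 1" using one vs n_def by (metis in_set_conv_nth)
    then have "v $ j = 1" by (simp add: v_def)
    with \<open>v = 0\<^sub>v n\<close> \<open>j < n\<close> show False by simp
  qed
  moreover have "v \<in> carrier_vec n" by (simp add: v_def)
  ultimately have "eigenvalue Ac a"
    unfolding eigenvalue_def eigenvector_def using Ac by auto
  then have "poly (char_poly Ac) a = 0" using eigenvalue_root_char_poly[OF Ac] by simp
  moreover have "char_poly Ac = map_poly of_int (char_poly A)"
    unfolding Ac_def by (rule of_int_hom.char_poly_hom[OF A])
  moreover have "lead_coeff (char_poly A) = 1"
    using degree_monic_char_poly[OF A] by simp
  ultimately show ?thesis unfolding algebraic_int_altdef_ipoly by auto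
qed


lemma alg_int_powers:
  fixes a :: complex
  assumes "algebraic_int a"
  shows "\<exists>n. \<forall>k. a ^ k \<in> zspan ((\<lambda>i. a ^ i) ` {..<n})"
proof -
  from assms obtain p where p: "lead_coeff p = 1" "\<forall>i. coeff p i \<in> \<int>" "poly p a = 0"
    by (auto elim: algebraic_int.cases)
  define n where "n = degree p"
  define P where "P = (\<lambda>i. a ^ i) ` {..<n}"
  have "n > 0"
  proof (rule ccontr)
    assume "\<not> n > 0"
    then have "degree p = 0" by (simp add: n_def)
    then have "p = [:1:]" using p(1) by (metis coeff_pCons_0 degree_0_id)
    with p(3) show False by simp
  qed
  have cn: "coeff p n = 1" using p(1) by (simp add: n_def)
  have "0 = poly p a" using p(3) by simp
  also have "\<dots> = (\<Sum>i\<le>n. coeff p i * a ^ i)" by (simp add: poly_altdef n_def)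
  also have "\<dots> = a ^ n + (\<Sum>i<n. coeff p i * a ^ i)"
    using cn by (simp add: lessThan_Suc_atMost[symmetric])
  finally have an: "a ^ n = - (\<Sum>i<n. coeff p i * a ^ i)" by (simp add: eq_neg_iff_add_eq_0)
  have "a ^ n \<in> zspan P"
    unfolding an
    by (intro zspan_neg zspan_sum zspan_Ints_mult) (auto simp: P_def p(2) intro: zspan_base)
  have step: "a * s \<in> zspan P" if "s \<in> P" for s
  proof -
    from that obtain i where i: "i < n" "s = a ^ i" by (auto simp: P_def)
    show ?thesis
    proof (cases "Suc i < n")
      case True
      then show ?thesis using i by (auto simp: P_def intro!: zspan_base image_eqI[of _ _ "Suc i"])
    next
      case False
      then have "Suc i = n" using i by simp
      then show ?thesis using i \<open>a ^ n \<in> zspan P\<close> by (metis power_Suc)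
    qed
  qed
  have "a ^ k \<in> zspan P" for k
  proof (induction k)
    case 0
    then show ?case using \<open>n > 0\<close> by (auto simp: P_def intro!: zspan_base image_eqI[of _ _ 0])
  next
    case (Suc k)
    then show ?case using zspan_mult_closed[OF Suc step] by simp
  qed
  then show ?thesis unfolding P_def by blast
qed

lemma alg_int_add_mult:
  fixes a b :: complex
  assumes a: "algebraic_int a" and b: "algebraic_int b"
  shows "algebraic_int (a + b) \<and> algebraic_int (a * b)"
proof -
  obtain n where n: "\<And>k. a ^ k \<in> zspan ((\<lambda>i. a ^ i) ` {..<n})" using alg_int_powers[OF a] by blast
  obtain m where m: "\<And>k. b ^ k \<in> zspan ((\<lambda>i. b ^ i) ` {..<m})" using alg_int_powers[OF b] by blast
  define S where "S = (\<lambda>(i,j). a ^ i * b ^ j) ` ({..<n} \<times> {..<m})"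
  have fin: "finite S" by (simp add: S_def)
  have all: "a ^ i * b ^ j \<in> zspan S" for i j
  proof -
    have "b ^ j * a ^ i \<in> zspan S"
    proof (rule zspan_mult_closed[OF n])
      fix s assume "s \<in> (\<lambda>i. a ^ i) ` {..<n}"
      then obtain i' where i': "i' < n" "s = a ^ i'" by auto
      have "s * b ^ j \<in> zspan S"
      proof (rule zspan_mult_closed[OF m])
        fix t assume "t \<in> (\<lambda>i. b ^ i) ` {..<m}"
        then obtain j' where j': "j' < m" "t = b ^ j'" by auto
        show "s * t \<in> zspan S" using i' j' by (auto simp: S_def intro!: zspan_base image_eqI[of _ _ "(i', j')"])
      qed
      then show "b ^ j * s \<in> zspan S" by (simp add: mult.commute)
    qed
    then show ?thesis by (simp add: mult.commute)
  qed
  have one: "1 \<in> S"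
  proof -
    have "n > 0"
    proof (rule ccontr)
      assume "\<not> n > 0"
      then have "zspan ((\<lambda>i. a ^ i) ` {..<n}) = zspan {}" by simp
      moreover have "zspan {} \<subseteq> {0}"
      proof
        fix x assume "x \<in> zspan {}" then show "x \<in> {0}" by (induction rule: zspan.induct) auto
      qed
      ultimately show False using n[of 0] by auto
    qed
    moreover have "m > 0"
    proof (rule ccontr)
      assume "\<not> m > 0"
      then have "zspan ((\<lambda>i. b ^ i) ` {..<m}) = zspan {}" by simp
      moreover have "zspan {} \<subseteq> {0}"
      proof
        fix x assume "x \<in> zspan {}" then show "x \<in> {0}" by (induction rule: zspan.induct) auto
      qed
      ultimately show False using m[of 0] by auto
    qed
    ultimately show ?thesis by (auto simp: S_def intro!: image_eqI[of _ _ "(0,0)"])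
  qed
  have "algebraic_int (a + b)"
  proof (rule mod_crit[OF fin one])
    fix s assume "s \<in> S"
    then obtain i j where s: "s = a ^ i * b ^ j" by (auto simp: S_def)
    have "(a + b) * s = a ^ Suc i * b ^ j + a ^ i * b ^ Suc j" by (simp add: s algebra_simps)
    then show "(a + b) * s \<in> zspan S" using all[of "Suc i" j] all[of i "Suc j"] by (metis zspan_add)
  qed
  moreover have "algebraic_int (a * b)"
  proof (rule mod_crit[OF fin one])
    fix s assume "s \<in> S"
    then obtain i j where s: "s = a ^ i * b ^ j" by (auto simp: S_def)
    have "(a * b) * s = a ^ Suc i * b ^ Suc j" by (simp add: s algebra_simps)
    then show "(a * b) * s \<in> zspan S" using all[of "Suc i" "Suc j"] by metis
  qed
  ultimately show ?thesis by blast
qed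

lemma alg_denom:
  fixes x :: complex
  assumes "algebraic x"
  shows "\<exists>m::nat. m > 0 \<and> algebraic_int (of_nat m * x)"
proof -
  from assms obtain p where p: "\<And>i. coeff p i \<in> \<int>" "p \<noteq> 0" "poly p x = 0"
    using assms unfolding algebraic_def by blast
  define n where "n = degree p"
  define c where "c = lead_coeff p"
  have c0: "c \<noteq> 0" using p(2) by (simp add: c_def)
  have cI: "c \<in> \<int>" using p(1) by (simp add: c_def)
  have "n > 0"
  proof (rule ccontr)
    assume "\<not> n > 0"
    then have "degree p = 0" by (simp add: n_def)
    then have "p = [:c:]" by (metis c_def degree_0_id lead_coeff_pCons(1) pCons_0_0 coeff_pCons_0 )
    with p(3) c0 show False by simp
  qed
  define y where "y = c * x"
  define S where "S = (\<lambda>i. y ^ i) ` {..<n}"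
  have "0 = c ^ (n - 1) * poly p x" using p(3) by simp
  also have "\<dots> = c ^ (n - 1) * (\<Sum>i\<le>n. coeff p i * x ^ i)" by (simp add: poly_altdef n_def)
  also have "\<dots> = c ^ (n - 1) * (c * x ^ n + (\<Sum>i<n. coeff p i * x ^ i))"
    by (simp add: lessThan_Suc_atMost[symmetric] c_def n_def)
  also have "\<dots> = y ^ n + (\<Sum>i<n. coeff p i * c ^ (n - 1 - i) * y ^ i)"
  proof -
    have "c ^ (n - 1) * c * x ^ n = y ^ n" using \<open>n > 0\<close>
      by (simp add: y_def power_mult_distrib) (metis Suc_pred power_Suc2 mult.commute)
    moreover have "\<And>i. i < n \<Longrightarrow> c ^ (n - 1) * (coeff p i * x ^ i) = coeff p i * c ^ (n - 1 - i) * y ^ i"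
    proof -
      fix i assume that: "i < n"
      have "c ^ (n - 1) = c ^ (n - 1 - i) * c ^ i" using that by (simp flip: power_add)
      then show "c ^ (n - 1) * (coeff p i * x ^ i) = coeff p i * c ^ (n - 1 - i) * y ^ i" by (simp add: y_def power_mult_distrib)
    qed
    ultimately have "c ^ (n - 1) * (\<Sum>i<n. coeff p i * x ^ i) = (\<Sum>i<n. coeff p i * c ^ (n - 1 - i) * y ^ i)"
      unfolding sum_distrib_left by (intro sum.cong) auto
    with \<open>c ^ (n - 1) * c * x ^ n = y ^ n\<close> show ?thesis
      by (simp add: distrib_left mult.assoc)
  qed
  finally have yn: "y ^ n = - (\<Sum>i<n. coeff p i * c ^ (n - 1 - i) * y ^ i)"
    by (simp add: eq_neg_iff_add_eq_0)
  have "y ^ n \<in> zspan S"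
    unfolding yn
    by (intro zspan_neg zspan_sum zspan_Ints_mult) (auto simp: S_def p(1) cI intro: zspan_base)
  have "algebraic_int y"
  proof (rule mod_crit)
    show "finite S" by (simp add: S_def)
    show "1 \<in> S" using \<open>n > 0\<close> by (auto simp: S_def intro!: image_eqI[of _ _ 0])
    fix s assume "s \<in> S"
    then obtain i where i: "i < n" "s = y ^ i" by (auto simp: S_def)
    show "y * s \<in> zspan S"
    proof (cases "Suc i < n")
      case True
      then show ?thesis using i by (auto simp: S_def intro!: zspan_base image_eqI[of _ _ "Suc i"])
    next
      case False
      then have "Suc i = n" using i by simp
      then show ?thesis using i \<open>y ^ n \<in> zspan S\<close> by (metis power_Suc)
    qed
  qed
  obtain k where k: "c = of_int k" using cI by (auto elim: Ints_cases)
  have k0: "k \<noteq> 0" using c0 k by simp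
  show ?thesis
  proof (cases "k > 0")
    case True
    then show ?thesis using \<open>algebraic_int y\<close> k
      by (intro exI[of _ "nat k"]) (simp add: y_def)
  next
    case False
    then have "of_nat (nat (-k)) * x = - y" using k k0 by (simp add: y_def)
    then show ?thesis using \<open>algebraic_int y\<close> False k0
      by (intro exI[of _ "nat (-k)"]) simp
  qed
qed


lemma subfield_C_pow: "subfield_C K \<Longrightarrow> x \<in> K \<Longrightarrow> x ^ n \<in> K"
  by (induction n) (auto simp: subfield_C_def)

lemma nf_algebraic:
  assumes nf: "number_field K" and x: "x \<in> K"
  shows "algebraic x"
proof -
  interpret Q: vector_space "\<lambda>(q::rat) (z::complex). of_rat q * z"
    by unfold_locales (simp_all add: algebra_simps of_rat_add of_rat_mult)
  from nf obtain B where B: "finite B" "B \<subseteq> K"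
    "\<And>y. y \<in> K \<Longrightarrow> \<exists>c. (\<forall>b\<in>B. c b \<in> \<rat>) \<and> y = (\<Sum>b\<in>B. c b * b)"
    and sf: "subfield_C K"
    unfolding number_field_def by blast
  have KB: "K \<subseteq> Q.span B"
  proof
    fix y assume "y \<in> K"
    then obtain c where c: "\<forall>b\<in>B. c b \<in> \<rat>" "y = (\<Sum>b\<in>B. c b * b)" using B(3) by blast
    have "\<forall>b\<in>B. \<exists>q. c b = of_rat q" using c(1) by (auto simp: Rats_def)
    then obtain u where u: "\<And>b. b \<in> B \<Longrightarrow> c b = of_rat (u b)" by metis
    have "y = (\<Sum>b\<in>B. of_rat (u b) * b)" using c(2) u by simp
    then show "y \<in> Q.span B" unfolding Q.span_finite[OF B(1)] by blast
  qed
  define d where "d = card B"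
  show ?thesis
  proof (cases "inj_on (\<lambda>i. x ^ i) {..d}")
    case False
    then obtain i j where ij: "i \<le> d" "j \<le> d" "i \<noteq> j" "x ^ i = x ^ j"
      unfolding inj_on_def by blast
    show ?thesis
    proof (cases "x = 0")
      case True then show ?thesis by simp
    next
      case False
      obtain a b where ab: "a < b" "x ^ a = x ^ b"
        using ij by (metis linorder_neqE_nat)
      define k where "k = b - a"
      have k: "k > 0" using ab by (simp add: k_def)
      have "x ^ a * x ^ k = x ^ (a + k)" by (simp add: power_add)
      also have "a + k = b" using ab by (simp add: k_def)
      finally have "x ^ a * x ^ k = x ^ a * 1" using ab by simp
      then have xk: "x ^ k = 1" using False by simp
      define q :: "complex poly" where "q = monom 1 k - 1"
      have "coeff q k = 1" using k by (simp add: q_def coeff_monom)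
      then have "q \<noteq> 0" by auto
      moreover have "\<And>i. coeff q i \<in> \<int>"
        by (simp add: q_def coeff_monom coeff_1)
      moreover have "poly q x = 0" by (simp add: q_def poly_monom xk)
      ultimately show ?thesis using algebraicI[of q x] by blast
    qed
  next
    case True
    define S where "S = (\<lambda>i. x ^ i) ` {..d}"
    have cardS: "card S = d + 1" using True by (simp add: S_def card_image)
    have SK: "S \<subseteq> Q.span B" using KB subfield_C_pow[OF sf x] by (auto simp: S_def)
    have "Q.dependent S"
    proof (rule ccontr)
      assume "\<not> Q.dependent S"
      from Q.independent_span_bound[OF B(1) this SK] cardS show False by (simp add: d_def)
    qed
    then have "\<not> (\<forall>T\<subseteq>S. finite T \<longrightarrow> (\<forall>u. (\<Sum>v\<in>T. of_rat (u v) * v) = 0 \<longrightarrow> (\<forall>v\<in>T. u v = 0)))"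
      using Q.independent_explicit_finite_subsets[of S] by simp
    then obtain T u where T: "T \<subseteq> S" "finite T" "(\<Sum>v\<in>T. of_rat (u v) * v) = 0"
      and nz: "\<exists>v\<in>T. u v \<noteq> 0"
      by blast
    define q :: "complex poly" where
      "q = (\<Sum>i\<le>d. monom (if x ^ i \<in> T then of_rat (u (x ^ i)) else 0) i)"
    have cq: "coeff q i = (if i \<le> d \<and> x ^ i \<in> T then of_rat (u (x ^ i)) else 0)" for i
      by (simp add: q_def coeff_sum coeff_monom)
    have "\<And>i. coeff q i \<in> \<rat>" by (simp add: cq)
    moreover have "q \<noteq> 0"
    proof -
      from nz obtain v where v: "v \<in> T" "u v \<noteq> 0" by blast
      then obtain i where "i \<le> d" "v = x ^ i" using T(1) by (auto simp: S_def)
      then have "coeff q i \<noteq> 0" using v by (simp add: cq)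
      then show ?thesis by auto
    qed
    moreover have "poly q x = 0"
    proof -
      have "poly q x = (\<Sum>i\<le>d. (if x ^ i \<in> T then of_rat (u (x ^ i)) else 0) * x ^ i)"
        by (simp add: q_def poly_sum poly_monom)
      also have "\<dots> = (\<Sum>i\<in>{i. i \<le> d \<and> x ^ i \<in> T}. of_rat (u (x ^ i)) * x ^ i)"
        by (rule sum.mono_neutral_cong_right) auto
      also have "\<dots> = (\<Sum>v\<in>(\<lambda>i. x ^ i) ` {i. i \<le> d \<and> x ^ i \<in> T}. of_rat (u v) * v)"
      proof -
        have "inj_on (\<lambda>i. x ^ i) {i. i \<le> d \<and> x ^ i \<in> T}" by (rule inj_on_subset[OF True]) auto
        then show ?thesis by (simp add: sum.reindex)
      qed
      also have "(\<lambda>i. x ^ i) ` {i. i \<le> d \<and> x ^ i \<in> T} = T" using T(1) by (auto simp: S_def)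
      finally show ?thesis using T(3) by simp
    qed
    ultimately show ?thesis by (intro algebraicI') auto
  qed
qed

lemma alg_int_add: "algebraic_int a \<Longrightarrow> algebraic_int b \<Longrightarrow> algebraic_int (a + b :: complex)"
  using alg_int_add_mult by blast
lemma alg_int_mult: "algebraic_int a \<Longrightarrow> algebraic_int b \<Longrightarrow> algebraic_int (a * b :: complex)"
  using alg_int_add_mult by blast

lemma sf_0: "subfield_C K \<Longrightarrow> 0 \<in> K" and sf_1: "subfield_C K \<Longrightarrow> 1 \<in> K"
  and sf_add: "subfield_C K \<Longrightarrow> x \<in> K \<Longrightarrow> y \<in> K \<Longrightarrow> x + y \<in> K"
  and sf_diff: "subfield_C K \<Longrightarrow> x \<in> K \<Longrightarrow> y \<in> K \<Longrightarrow> x - y \<in> K"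
  and sf_mult: "subfield_C K \<Longrightarrow> x \<in> K \<Longrightarrow> y \<in> K \<Longrightarrow> x * y \<in> K"
  by (auto simp: subfield_C_def)

lemma sf_inverse: "subfield_C K \<Longrightarrow> x \<in> K \<Longrightarrow> inverse x \<in> K"
  by (cases "x = 0") (auto simp: subfield_C_def)

lemma sf_divide: "subfield_C K \<Longrightarrow> x \<in> K \<Longrightarrow> y \<in> K \<Longrightarrow> x / y \<in> K"
  by (simp add: divide_inverse sf_mult sf_inverse)

lemma sf_uminus: "subfield_C K \<Longrightarrow> x \<in> K \<Longrightarrow> - x \<in> K"
  using sf_diff[of K 0 x] sf_0 by simp

lemma sf_of_nat: "subfield_C K \<Longrightarrow> of_nat n \<in> K"
  by (induction n) (auto simp: sf_0 sf_1 sf_add)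

lemma sf_of_int: "subfield_C K \<Longrightarrow> of_int n \<in> K"
proof (cases "n \<ge> 0")
  case True
  assume "subfield_C K"
  then show ?thesis using True sf_of_nat[of K "nat n"] by simp
next
  case False
  assume "subfield_C K"
  then show ?thesis using False sf_uminus[OF _ sf_of_nat[of K "nat (-n)"]] by simp
qed

lemma sf_sum: "subfield_C K \<Longrightarrow> (\<And>a. a \<in> A \<Longrightarrow> f a \<in> K) \<Longrightarrow> sum f A \<in> K"
  by (induction A rule: infinite_finite_induct) (auto simp: sf_0 sf_add)

lemma sf_prod: "subfield_C K \<Longrightarrow> (\<And>a. a \<in> A \<Longrightarrow> f a \<in> K) \<Longrightarrow> prod f A \<in> K"
  by (induction A rule: infinite_finite_induct) (auto simp: sf_1 sf_mult)

lemma sf_pow: "subfield_C K \<Longrightarrow> x \<in> K \<Longrightarrow> x ^ n \<in> K"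
  by (rule subfield_C_pow)

lemma Sint_K: "x \<in> S_integers K N \<Longrightarrow> x \<in> K"
  by (simp add: S_integers_def)

lemma Sint_add:
  assumes "subfield_C K" "x \<in> S_integers K N" "y \<in> S_integers K N"
  shows "x + y \<in> S_integers K N"
proof -
  from assms obtain a b where a: "algebraic_int (of_nat N ^ a * x)" and b: "algebraic_int (of_nat N ^ b * y)"
    and K: "x \<in> K" "y \<in> K" by (auto simp: S_integers_def)
  have "of_nat N ^ (a + b) * (x + y) = of_nat (N ^ b) * (of_nat N ^ a * x) + of_nat (N ^ a) * (of_nat N ^ b * y)"
    by (simp add: power_add algebra_simps)
  moreover have "algebraic_int (of_nat (N ^ b) * (of_nat N ^ a * x) + of_nat (N ^ a) * (of_nat N ^ b * y))"
    by (intro alg_int_add alg_int_mult algebraic_int_of_nat a b)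
  ultimately have "algebraic_int (of_nat N ^ (a + b) * (x + y))" by simp
  then show ?thesis using K assms(1) by (auto simp: S_integers_def sf_add)
qed

lemma Sint_mult:
  assumes "subfield_C K" "x \<in> S_integers K N" "y \<in> S_integers K N"
  shows "x * y \<in> S_integers K N"
proof -
  from assms obtain a b where a: "algebraic_int (of_nat N ^ a * x)" and b: "algebraic_int (of_nat N ^ b * y)"
    and K: "x \<in> K" "y \<in> K" by (auto simp: S_integers_def)
  have "of_nat N ^ (a + b) * (x * y) = (of_nat N ^ a * x) * (of_nat N ^ b * y)"
    by (simp add: power_add algebra_simps)
  then have "algebraic_int (of_nat N ^ (a + b) * (x * y))"
    using a b by (metis alg_int_mult)
  then show ?thesis using K assms(1) by (auto simp: S_integers_def sf_mult)
qed

lemma Sint_uminus: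
  assumes "subfield_C K" "x \<in> S_integers K N"
  shows "- x \<in> S_integers K N"
  using assms by (auto simp: S_integers_def sf_uminus)

lemma Sint_diff:
  assumes "subfield_C K" "x \<in> S_integers K N" "y \<in> S_integers K N"
  shows "x - y \<in> S_integers K N"
  using Sint_add[OF assms(1,2) Sint_uminus[OF assms(1,3)]] by simp

lemma Sint_of_int: "subfield_C K \<Longrightarrow> of_int n \<in> S_integers K N"
  by (auto simp: S_integers_def sf_of_int intro!: exI[of _ 0])

lemma Sint_of_nat: "subfield_C K \<Longrightarrow> of_nat n \<in> S_integers K N"
  using Sint_of_int[of K "int n"] by simp

lemma Sint_0: "subfield_C K \<Longrightarrow> 0 \<in> S_integers K N"
  using Sint_of_nat[of K 0] by simp
lemma Sint_1: "subfield_C K \<Longrightarrow> 1 \<in> S_integers K N"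
  using Sint_of_nat[of K 1] by simp

lemma Sint_sum: "subfield_C K \<Longrightarrow> (\<And>a. a \<in> A \<Longrightarrow> f a \<in> S_integers K N) \<Longrightarrow> sum f A \<in> S_integers K N"
  by (induction A rule: infinite_finite_induct) (auto simp: Sint_0 Sint_add)

lemma Sint_prod: "subfield_C K \<Longrightarrow> (\<And>a. a \<in> A \<Longrightarrow> f a \<in> S_integers K N) \<Longrightarrow> prod f A \<in> S_integers K N"
  by (induction A rule: infinite_finite_induct) (auto simp: Sint_1 Sint_mult)

lemma Sint_pow: "subfield_C K \<Longrightarrow> x \<in> S_integers K N \<Longrightarrow> x ^ n \<in> S_integers K N"
  by (induction n) (auto simp: Sint_1 Sint_mult)

lemma Sint_mono:
  assumes "x \<in> S_integers K N" "N dvd N'"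
  shows "x \<in> S_integers K N'"
proof -
  from assms obtain a where a: "algebraic_int (of_nat N ^ a * x)" and K: "x \<in> K"
    by (auto simp: S_integers_def)
  from assms(2) obtain t where t: "N' = N * t" by blast
  have "of_nat N' ^ a * x = of_nat (t ^ a) * (of_nat N ^ a * x)" by (simp add: t power_mult_distrib)
  then have "algebraic_int (of_nat N' ^ a * x)" using a by (metis alg_int_mult algebraic_int_of_nat)
  then show ?thesis using K by (auto simp: S_integers_def)
qed

lemma Sint_exists:
  assumes "number_field K" "x \<in> K"
  shows "\<exists>m::nat. m > 0 \<and> x \<in> S_integers K m"
proof -
  obtain m where m: "m > 0" "algebraic_int (of_nat m * x)"
    using alg_denom[OF nf_algebraic[OF assms]] by blast
  then have "x \<in> S_integers K m" using assms(2) unfolding S_integers_def by (auto intro!: exI[of _ "1::nat"])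
  then show ?thesis using m by blast
qed

lemma Sint_finite_set:
  assumes "number_field K" "finite X" "X \<subseteq> K"
  shows "\<exists>N::nat. N > 0 \<and> 2 dvd N \<and> X \<subseteq> S_integers K N"
proof -
  have "\<forall>x\<in>X. \<exists>m::nat. m > 0 \<and> x \<in> S_integers K m" using Sint_exists[OF assms(1)] assms(3) by blast
  then obtain m where m: "\<And>x. x \<in> X \<Longrightarrow> m x > 0 \<and> x \<in> S_integers K (m x)" by metis
  define N where "N = 2 * (\<Prod>x\<in>X. m x)"
  have "N > 0" using m assms(2) by (simp add: N_def)
  moreover have "2 dvd N" by (simp add: N_def)
  moreover have "X \<subseteq> S_integers K N"
  proof
    fix x assume x: "x \<in> X"
    have "m x dvd N" using x assms(2) unfolding N_def by (intro dvd_mult dvd_prodI)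
    then show "x \<in> S_integers K N" using m[OF x] Sint_mono by blast
  qed
  ultimately show ?thesis by blast
qed

lemma Sint_inv_pow2:
  assumes "subfield_C K" "2 dvd N"
  shows "inverse (2 ^ a :: complex) \<in> S_integers K N"
proof -
  from assms(2) obtain t where t: "N = 2 * t" by blast
  have "of_nat N ^ a * inverse (2 ^ a :: complex) = of_nat (t ^ a)"
    by (simp add: t power_mult_distrib field_simps)
  then have "algebraic_int (of_nat N ^ a * inverse (2 ^ a :: complex))" by simp (metis algebraic_int_of_nat of_nat_power)
  moreover have "inverse (2 ^ a :: complex) \<in> K"
    using sf_inverse[OF assms(1) sf_of_nat[OF assms(1), of "2 ^ a"]] by simp
  ultimately show ?thesis by (auto simp: S_integers_def)
qed

lemma Sunit_pow2:
  assumes "subfield_C K" "2 dvd N"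
  shows "S_unit K N (2 ^ a)"
  using Sint_inv_pow2[OF assms, of a] Sint_of_nat[OF assms(1), of "2 ^ a"]
  unfolding S_unit_def by simp


lemma alg_int_sum: "(\<And>a. a \<in> A \<Longrightarrow> algebraic_int (f a :: complex)) \<Longrightarrow> algebraic_int (sum f A)"
  by (induction A rule: infinite_finite_induct) (auto intro: alg_int_add)

lemma alg_int_pow: "algebraic_int (a :: complex) \<Longrightarrow> algebraic_int (a ^ n)"
  by (induction n) (auto intro: alg_int_mult)

lemma alg_int_poly_eval:
  fixes a :: complex
  assumes "algebraic_int a"
  shows "algebraic_int (poly (of_int_poly q) a)"
proof -
  have "poly (of_int_poly q) a = (\<Sum>i\<le>degree q. of_int (coeff q i) * a ^ i)"
    by (simp add: poly_altdef coeff_map_poly degree_map_poly)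
  also have "algebraic_int \<dots>"
    by (intro alg_int_sum alg_int_mult algebraic_int_of_int) (simp add: assms alg_int_pow)
  finally show ?thesis .
qed


lemma alg_int_inv_multiple_aux:
  fixes a :: complex
  assumes "algebraic_int a" "a \<noteq> 0"
  shows "p \<noteq> 0 \<Longrightarrow> poly (of_int_poly p) a = 0 \<Longrightarrow> \<exists>n::int. n \<noteq> 0 \<and> algebraic_int (of_int n / a)"
proof (induction p rule: pCons_induct)
  case 0
  then show ?case by simp
next
  case (pCons c q)
  have "(of_int_poly (pCons c q) :: complex poly) = pCons (of_int c) (of_int_poly q)"
    by (rule poly_eqI) (simp add: coeff_map_poly coeff_pCons split: nat.splits)
  then have ev: "poly (of_int_poly (pCons c q)) a = of_int c + a * poly (of_int_poly q) a"
    by simp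
  show ?case
  proof (cases "c = 0")
    case False
    have "of_int c / a = - poly (of_int_poly q) a"
      using pCons.prems(2) ev assms(2) by (simp add: field_simps eq_neg_iff_add_eq_0)
    then show ?thesis using False alg_int_poly_eval[OF assms(1), of q] by (intro exI[of _ c]) simp
  next
    case True
    then have "q \<noteq> 0" using pCons.hyps pCons.prems(1) by auto
    moreover have "poly (of_int_poly q) a = 0" using pCons.prems(2) ev True assms(2) by simp
    ultimately show ?thesis using pCons.IH by blast
  qed
qed

lemma alg_int_inv_multiple:
  fixes a :: complex
  assumes "algebraic_int a" "a \<noteq> 0"
  shows "\<exists>n::int. n \<noteq> 0 \<and> algebraic_int (of_int n / a)"
proof -
  obtain p where p: "poly (of_int_poly p) a = 0" "lead_coeff p = 1"
    using assms(1) unfolding algebraic_int_altdef_ipoly by blast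
  then have "p \<noteq> 0" by auto
  then show ?thesis using alg_int_inv_multiple_aux[OF assms] p by blast
qed

lemma Sint_norm:
  assumes sf: "subfield_C K" and m: "m \<in> S_integers K N" and m0: "m \<noteq> 0" and N: "N > 0"
  shows "\<exists>n::int. n \<noteq> 0 \<and> of_int n / m \<in> S_integers K N"
proof -
  from m obtain k where k: "algebraic_int (of_nat N ^ k * m)" and mK: "m \<in> K"
    by (auto simp: S_integers_def)
  have a0: "of_nat N ^ k * m \<noteq> 0" using m0 N by simp
  obtain n where n: "n \<noteq> 0" "algebraic_int (of_int n / (of_nat N ^ k * m))"
    using alg_int_inv_multiple[OF k a0] by blast
  have "of_int n / m = of_nat (N ^ k) * (of_int n / (of_nat N ^ k * m))"
    using N by (simp add: field_simps)
  then have "algebraic_int (of_int n / m)"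
    using n(2) by (simp only:) (intro alg_int_mult algebraic_int_of_nat)
  moreover have "of_int n / m \<in> K" using sf mK by (intro sf_divide sf_of_int)
  ultimately show ?thesis using n(1) by (auto simp: S_integers_def intro!: exI[of _ n] exI[of _ "0::nat"])
qed

lemma pow2_cong:
  fixes n :: int
  assumes "n \<noteq> 0"
  shows "\<exists>e a t. e > 0 \<and> (2::int) ^ a * (2 ^ e - 1) = n * t"
proof -
  define M where "M = nat \<bar>n\<bar>"
  define f where "f = (\<lambda>k::nat. (2::int) ^ k mod \<bar>n\<bar>)"
  have M0: "M > 0" using assms by (simp add: M_def)
  have "f ` {0..M} \<subseteq> {0..<\<bar>n\<bar>}" using assms by (auto simp: f_def)
  then have "card (f ` {0..M}) \<le> card {0..<\<bar>n\<bar>}" by (intro card_mono) auto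
  also have "card {0..<\<bar>n\<bar>} = M" by (simp add: M_def)
  finally have "card (f ` {0..M}) < card {0..M}" by simp
  then have "\<not> inj_on f {0..M}" by (rule pigeonhole)
  then obtain a b where ab: "a \<in> {0..M}" "b \<in> {0..M}" "a \<noteq> b" "f a = f b"
    unfolding inj_on_def by blast
  obtain a' b' where ab': "a' < b'" "f a' = f b'"
    using ab by (metis linorder_neqE_nat)
  then have "\<bar>n\<bar> dvd 2 ^ a' - 2 ^ b'" by (simp add: f_def mod_eq_dvd_iff)
  then have "n dvd 2 ^ a' - 2 ^ b'" by simp
  then have "n dvd 2 ^ b' - 2 ^ a'" by (metis dvd_minus_iff minus_diff_eq)
  moreover have "(2::int) ^ b' - 2 ^ a' = 2 ^ a' * (2 ^ (b' - a') - 1)"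
    using ab'(1) by (simp add: algebra_simps flip: power_add)
  ultimately obtain t where "2 ^ a' * (2 ^ (b' - a') - 1) = n * t" by (auto elim!: dvdE)
  then show ?thesis using ab'(1) by (intro exI[of _ "b' - a'"] exI[of _ a'] exI[of _ t]) simp
qed

lemma Sint_pow2_minus1:
  assumes sf: "subfield_C K" and N2: "2 dvd N" and n: "n \<noteq> 0"
  shows "\<exists>e>0. \<forall>k. ((2::complex) ^ (e * k) - 1) / of_int n \<in> S_integers K N"
proof -
  obtain e a t where e: "e > 0" and eq: "(2::int) ^ a * (2 ^ e - 1) = n * t"
    using pow2_cong[OF n] by blast
  have eqc: "(2::complex) ^ a * (2 ^ e - 1) = of_int n * of_int t"
    using arg_cong[OF eq, of "of_int :: int \<Rightarrow> complex"] by simp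
  have "((2::complex) ^ (e * k) - 1) / of_int n \<in> S_integers K N" for k
  proof -
    have "(2::complex) ^ (e * k) - 1 = ((2::complex) ^ e) ^ k - 1" by (simp add: power_mult)
    also have "\<dots> = (2 ^ e - 1) * (\<Sum>i<k. (2 ^ e) ^ i)" by (rule power_diff_1_eq)
    finally have G: "(2::complex) ^ (e * k) - 1 = (2 ^ e - 1) * (\<Sum>i<k. (2 ^ e) ^ i)" .
    have "((2::complex) ^ (e * k) - 1) / of_int n = (2 ^ e - 1) * (\<Sum>i<k. (2 ^ e) ^ i) / of_int n"
      using G by simp
    also have "(2 ^ e - 1 :: complex) = of_int n * of_int t * inverse (2 ^ a)" using eqc by (simp add: field_simps)
    finally have "((2::complex) ^ (e * k) - 1) / of_int n =
        of_int t * (\<Sum>i<k. (2 ^ e) ^ i) * inverse (2 ^ a)"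
      using n by simp
    also have "\<dots> \<in> S_integers K N"
      by (intro Sint_mult sf Sint_of_int Sint_inv_pow2 N2 Sint_sum)
         (metis Sint_of_nat of_nat_numeral of_nat_power sf)
    finally show ?thesis .
  qed
  then show ?thesis using e by blast
qed

lemma monomials_finite: "finite (monomials d)"
proof -
  define f where "f = (\<lambda>g::nat \<Rightarrow> nat. \<lambda>j. if j < 4 then g j else 0)"
  have "monomials d \<subseteq> f ` (PiE {..<4} (\<lambda>_. {..d}))"
  proof
    fix \<alpha> assume a: "\<alpha> \<in> monomials d"
    have le: "\<alpha> j \<le> d" if "j < 4" for j
    proof -
      have "\<alpha> j \<le> (\<Sum>j<4. \<alpha> j)" using that by (intro member_le_sum) auto
      then show ?thesis using a by (simp add: monomials_def)
    qed
    have "\<alpha> = f (restrict \<alpha> {..<4})" using a by (auto simp: f_def monomials_def)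
    moreover have "restrict \<alpha> {..<4} \<in> PiE {..<4} (\<lambda>_. {..d})" using le by auto
    ultimately show "\<alpha> \<in> f ` (PiE {..<4} (\<lambda>_. {..d}))" by blast
  qed
  moreover have "finite (PiE {..<4::nat} (\<lambda>_. {..d}))" by (intro finite_PiE) auto
  ultimately show ?thesis by (meson finite_imageI finite_subset)
qed

lemma hpoly_local: "(\<And>j. j < 4 \<Longrightarrow> x j = x' j) \<Longrightarrow> hpoly_eval d c x = hpoly_eval d c x'"
  unfolding hpoly_eval_def by (intro sum.cong refl arg_cong2[where f = "(*)"] prod.cong) auto

lemma hpoly_homog: "hpoly_eval d c (\<lambda>j. t * x j) = t ^ d * hpoly_eval d c x"
proof -
  have "(\<Prod>j<4. (t * x j) ^ \<alpha> j) = t ^ d * (\<Prod>j<4. x j ^ \<alpha> j)" if "\<alpha> \<in> monomials d" for \<alpha>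
  proof -
    have "(\<Prod>j<4. (t * x j) ^ \<alpha> j) = (\<Prod>j<4. t ^ \<alpha> j) * (\<Prod>j<4. x j ^ \<alpha> j)"
      by (simp add: power_mult_distrib prod.distrib)
    also have "(\<Prod>j<4. t ^ \<alpha> j) = t ^ (\<Sum>j<4. \<alpha> j)" by (simp add: power_sum)
    also have "(\<Sum>j<4. \<alpha> j) = d" using that by (simp add: monomials_def)
    finally show ?thesis .
  qed
  then show ?thesis unfolding hpoly_eval_def sum_distrib_left
    by (intro sum.cong) (auto simp: algebra_simps)
qed

lemma hpoly_line: "\<exists>q. \<forall>s. hpoly_eval d c (\<lambda>j. a j + s * b j) = poly q s"
proof -
  define q where "q = (\<Sum>\<alpha>\<in>monomials d. Polynomial.smult (c \<alpha>) (\<Prod>j<4. [:a j, b j:] ^ \<alpha> j))"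
  have "hpoly_eval d c (\<lambda>j. a j + s * b j) = poly q s" for s
    by (simp add: q_def hpoly_eval_def poly_sum poly_prod algebra_simps)
  then show ?thesis by blast
qed

lemma digits_eq:
  fixes D a b r r' :: nat
  assumes "a < D" "b < D" "a + D * r = b + D * r'"
  shows "a = b \<and> r = r'"
proof -
  have "(a + D * r) mod D = a" using assms(1) by simp
  moreover have "(b + D * r') mod D = b" using assms(2) by simp
  ultimately have ab: "a = b" using assms(3) by simp
  then have "D * r = D * r'" using assms(3) by simp
  then show ?thesis using ab assms(1) by simp
qed

lemma hpoly_zero:
  assumes "\<And>x. hpoly_eval d c x = 0"
  shows "\<alpha> \<in> monomials d \<Longrightarrow> c \<alpha> = 0"
proof -
  define D where "D = Suc d"
  define e where "e = (\<lambda>\<alpha>::nat\<Rightarrow>nat. (\<Sum>j<4. D ^ j * \<alpha> j))"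
  have e4: "e \<alpha> = \<alpha> 0 + D * (\<alpha> 1 + D * (\<alpha> 2 + D * \<alpha> 3))" for \<alpha>
    by (simp add: e_def numeral_eq_Suc algebra_simps power_Suc)
  have small: "\<alpha> j < D" if "\<alpha> \<in> monomials d" "j < 4" for \<alpha> j
  proof -
    have "\<alpha> j \<le> (\<Sum>j<4. \<alpha> j)" using that by (intro member_le_sum) auto
    then show ?thesis using that by (simp add: monomials_def D_def)
  qed
  have inj: "inj_on e (monomials d)"
  proof
    fix \<alpha> \<beta> assume a: "\<alpha> \<in> monomials d" and b: "\<beta> \<in> monomials d" and eq: "e \<alpha> = e \<beta>"
    from digits_eq[OF small[OF a, of 0] small[OF b, of 0]] eq e4
    have 0: "\<alpha> 0 = \<beta> 0" and r1: "\<alpha> 1 + D * (\<alpha> 2 + D * \<alpha> 3) = \<beta> 1 + D * (\<beta> 2 + D * \<beta> 3)"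
      by auto
    from digits_eq[OF small[OF a, of 1] small[OF b, of 1] r1]
    have 1: "\<alpha> 1 = \<beta> 1" and r2: "\<alpha> 2 + D * \<alpha> 3 = \<beta> 2 + D * \<beta> 3" by auto
    from digits_eq[OF small[OF a, of 2] small[OF b, of 2] r2]
    have 2: "\<alpha> 2 = \<beta> 2" and 3: "\<alpha> 3 = \<beta> 3" by auto
    show "\<alpha> = \<beta>"
    proof
      fix j
      show "\<alpha> j = \<beta> j"
      proof (cases "j < 4")
        case True
        then have "j = 0 \<or> j = 1 \<or> j = 2 \<or> j = 3" by auto
        then show ?thesis using 0 1 2 3 by auto
      next
        case False
        then show ?thesis using a b by (simp add: monomials_def)
      qed
    qed
  qed
  define Q where "Q = (\<Sum>\<alpha>\<in>monomials d. monom (c \<alpha>) (e \<alpha>))"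
  have "poly Q t = 0" for t
  proof -
    have "poly Q t = hpoly_eval d c (\<lambda>j. t ^ (D ^ j))"
    proof -
      have "(\<Prod>j<4. (t ^ (D ^ j)) ^ \<alpha> j) = t ^ e \<alpha>" for \<alpha>
        by (simp add: e_def power_sum flip: power_mult)
      then show ?thesis by (simp add: Q_def hpoly_eval_def poly_sum poly_monom)
    qed
    then show ?thesis using assms by simp
  qed
  then have Q0: "Q = 0" using poly_all_0_iff_0 by blast
  assume am: "\<alpha> \<in> monomials d"
  have "coeff Q (e \<alpha>) = (\<Sum>\<beta>\<in>monomials d. if e \<beta> = e \<alpha> then c \<beta> else 0)"
    by (simp add: Q_def coeff_sum coeff_monom)
  also have "\<dots> = (\<Sum>\<beta>\<in>monomials d. if \<beta> = \<alpha> then c \<beta> else 0)"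
    using inj am by (intro sum.cong) (auto dest: inj_onD)
  also have "\<dots> = c \<alpha>" using am monomials_finite by simp
  finally show "c \<alpha> = 0" using Q0 by simp
qed


lemma line_vanish:
  fixes f :: "complex \<Rightarrow> complex"
  assumes "\<exists>q. \<forall>s. f s = poly q s" "infinite Z" "\<And>s. s \<in> Z \<Longrightarrow> f s = 0"
  shows "f s = 0"
proof -
  from assms(1) obtain q where q: "\<And>s. f s = poly q s" by blast
  have "Z \<subseteq> {x. poly q x = 0}" using assms(3) q by auto
  then have "infinite {x. poly q x = 0}" using assms(2) finite_subset by blast
  then have "q = 0" using poly_roots_finite by blast
  then show ?thesis using q by simp
qed

definition yv :: "nat \<Rightarrow> nat \<Rightarrow> nat \<Rightarrow> nat \<Rightarrow> complex \<Rightarrow> complex \<Rightarrow> complex \<Rightarrow> nat \<Rightarrow> complex" where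
  "yv i j k n0 w u v n = (if n = i then 1 else if n = j then u else if n = k then v else if n = n0 then w else 0)"

lemma density:
  fixes Bm Hm :: "nat \<Rightarrow> nat \<Rightarrow> complex" and A :: "(nat \<Rightarrow> complex) set"
  assumes inv: "\<And>a b. a < 4 \<Longrightarrow> b < 4 \<Longrightarrow> (\<Sum>c<4. Bm a c * Hm c b) = (if a = b then 1 else 0)"
    and S4: "{..<4::nat} = {i, j, k, n0}"
    and dist: "i \<noteq> j" "i \<noteq> k" "j \<noteq> k" "n0 \<noteq> i" "n0 \<noteq> j" "n0 \<noteq> k"
    and W: "infinite W" and U: "infinite U" and V: "\<And>u. u \<in> U \<Longrightarrow> infinite (V u)"
    and pts: "\<And>w u v. w \<in> W \<Longrightarrow> u \<in> U \<Longrightarrow> v \<in> V u \<Longrightarrow>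
              (\<lambda>c. \<Sum>n<4. Bm c n * yv i j k n0 w u v n) \<in> A"
  shows "zariski_dense_P3 A"
  unfolding zariski_dense_P3_def
proof (intro allI impI)
  fix d c assume van: "\<forall>x\<in>A. hpoly_eval d c x = 0"
  define T where "T = (\<lambda>y::nat\<Rightarrow>complex. \<lambda>c. \<Sum>n<4. Bm c n * y n)"
  define F where "F = (\<lambda>y. hpoly_eval d c (T y))"
  have lineF: "\<exists>q. \<forall>s. F (\<lambda>n. a n + s * b n) = poly q s" for a b
  proof -
    have "T (\<lambda>n. a n + s * b n) = (\<lambda>c. T a c + s * T b c)" for s
      by (auto simp: T_def algebra_simps sum.distrib sum_distrib_left)
    then show ?thesis using hpoly_line[of d c "T a" "T b"] by (simp add: F_def)
  qed
  have e: "(\<lambda>n. a n + s * (if n = m then 1 else 0)) = a(m := a m + s)" for a :: "nat \<Rightarrow> complex" and s m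
    by auto
  have lineF': "\<exists>q. \<forall>s. F (a(m := a m + s)) = poly q s" for a m
    using lineF[of a "\<lambda>n. if n = m then 1 else 0"] by (simp add: e)
  have step0: "F (yv i j k n0 w u v) = 0" if "w \<in> W" "u \<in> U" "v \<in> V u" for w u v
    using van pts[OF that] by (simp add: F_def T_def)
  have upd_n0: "(yv i j k n0 0 u v)(n0 := yv i j k n0 0 u v n0 + s) = yv i j k n0 s u v" for u v s
    using dist by (auto simp: yv_def)
  have step1: "F (yv i j k n0 w u v) = 0" if "u \<in> U" "v \<in> V u" for w u v
    using line_vanish[OF lineF'[of "yv i j k n0 0 u v" n0] W, of w] step0[OF _ that] by (simp add: upd_n0)
  have upd_k: "(yv i j k n0 w u 0)(k := yv i j k n0 w u 0 k + s) = yv i j k n0 w u s" for w u s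
    using dist by (auto simp: yv_def)
  have step2: "F (yv i j k n0 w u v) = 0" if "u \<in> U" for w u v
    using line_vanish[OF lineF'[of "yv i j k n0 w u 0" k] V[OF that], of v] step1[OF that] by (simp add: upd_k)
  have upd_j: "(yv i j k n0 w 0 v)(j := yv i j k n0 w 0 v j + s) = yv i j k n0 w s v" for w v s
    using dist by (auto simp: yv_def)
  have step3: "F (yv i j k n0 w u v) = 0" for w u v
    using line_vanish[OF lineF'[of "yv i j k n0 w 0 v" j] U, of u] step2 by (simp add: upd_j)
  have Tloc: "T y = T y'" if "\<And>n. n < 4 \<Longrightarrow> y n = y' n" for y y'
    unfolding T_def using that by (intro ext sum.cong) auto
  have Thom: "T (\<lambda>n. t * y n) = (\<lambda>c. t * T y c)" for t y
    by (auto simp: T_def sum_distrib_left algebra_simps)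
  have step4: "F y = 0" if "y i \<noteq> 0" for y
  proof -
    define z where "z = yv i j k n0 (y n0 / y i) (y j / y i) (y k / y i)"
    have "T y = T (\<lambda>n. y i * z n)"
    proof (rule Tloc)
      fix n :: nat assume "n < 4"
      then have "n \<in> {i, j, k, n0}" using S4 by blast
      then show "y n = y i * z n" using that dist by (auto simp: z_def yv_def)
    qed
    then have "F y = y i ^ d * F z" by (simp add: F_def Thom hpoly_homog)
    also have "F z = 0" by (simp add: z_def step3)
    finally show ?thesis by simp
  qed
  have step5: "F y = 0" for y
  proof -
    have inf: "infinite (UNIV - {- y i} :: complex set)"
      by (rule Diff_infinite_finite) (auto simp: infinite_UNIV_char_0)
    have z: "F (y(i := y i + s)) = 0" if "s \<in> UNIV - {- y i}" for s
    proof (rule step4)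
      show "(y(i := y i + s)) i \<noteq> 0" using that by (simp add: add_eq_0_iff)
    qed
    have "F (y(i := y i + 0)) = 0"
      by (rule line_vanish[where f = "\<lambda>s. F (y(i := y i + s))", OF lineF'[of y i] inf z])
    then show ?thesis by simp
  qed
  have "hpoly_eval d c x = 0" for x
  proof -
    define y where "y = (\<lambda>n. \<Sum>m<4. Hm n m * x m)"
    have "hpoly_eval d c x = hpoly_eval d c (T y)"
    proof (rule hpoly_local)
      fix a :: nat assume a: "a < 4"
      have "T y a = (\<Sum>n<4. \<Sum>m<4. Bm a n * Hm n m * x m)"
        by (simp add: T_def y_def sum_distrib_left mult.assoc)
      also have "\<dots> = (\<Sum>m<4. (\<Sum>n<4. Bm a n * Hm n m) * x m)"
        by (subst sum.swap) (simp add: sum_distrib_right)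
      also have "\<dots> = (\<Sum>m<4. (if a = m then 1 else 0) * x m)"
        using a inv by (intro sum.cong) auto
      also have "\<dots> = (\<Sum>m<4. if m = a then x m else 0)" by (intro sum.cong) auto
      also have "\<dots> = x a" using a by simp
      finally show "x a = T y a" by simp
    qed
    also have "\<dots> = F y" by (simp add: F_def)
    finally show ?thesis using step5 by simp
  qed
  then show "\<forall>\<alpha>\<in>monomials d. c \<alpha> = 0" using hpoly_zero by blast
qed

lemma det_in_K:
  assumes sf: "subfield_C K" and A: "A \<in> carrier_mat n n"
    and ent: "\<And>a b. a < n \<Longrightarrow> b < n \<Longrightarrow> A $$ (a, b) \<in> K"
  shows "det A \<in> K"
proof -
  have "det A = (\<Sum>p\<in>{p. p permutes {0..<n}}. signof p * (\<Prod>i=0..<n. A $$ (i, p i)))"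
    by (rule det_def'[OF A])
  also have "\<dots> \<in> K"
  proof (rule sf_sum[OF sf])
    fix p assume p: "p \<in> {p. p permutes {0..<n}}"
    have "(\<Prod>i=0..<n. A $$ (i, p i)) \<in> K"
    proof (rule sf_prod[OF sf])
      fix i assume i: "i \<in> {0..<n}"
      then have "p i \<in> {0..<n}" using permutes_in_image[of p "{0..<n}" i] p by simp
      then show "A $$ (i, p i) \<in> K" using i ent by auto
    qed
    then show "signof p * (\<Prod>i=0..<n. A $$ (i, p i)) \<in> K"
      by (intro sf_mult[OF sf] sf_of_int[OF sf])
  qed
  finally show ?thesis .
qed

lemma inverse_matrix_K:
  fixes h :: "nat \<Rightarrow> nat \<Rightarrow> complex"
  assumes sf: "subfield_C K" and hK: "\<And>a b. a < 4 \<Longrightarrow> b < 4 \<Longrightarrow> h a b \<in> K"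
    and gp: "general_position4 h"
  shows "\<exists>Bm. (\<forall>a<4. \<forall>b<4. Bm a b \<in> K) \<and>
     (\<forall>a<4. \<forall>b<4. (\<Sum>c<4. h a c * Bm c b) = (if a = b then 1 else 0)) \<and>
     (\<forall>a<4. \<forall>b<4. (\<Sum>c<4. Bm a c * h c b) = (if a = b then 1 else 0))"
proof -
  define M :: "complex mat" where "M = mat 4 4 (\<lambda>(a,b). h a b)"
  have M: "M \<in> carrier_mat 4 4" by (simp add: M_def)
  have MT: "transpose_mat M \<in> carrier_mat 4 4" by (simp add: M_def)
  have dM: "det M \<noteq> 0"
  proof
    assume "det M = 0"
    then have "det (transpose_mat M) = 0" using det_transpose[OF M] by simp
    then obtain v where v: "v \<in> carrier_vec 4" "v \<noteq> 0\<^sub>v 4" "transpose_mat M *\<^sub>v v = 0\<^sub>v 4"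
      using det_0_iff_vec_prod_zero_field[OF MT] by blast
    have "\<forall>j<4. (\<Sum>i<4. v $ i * h i j) = 0"
    proof (intro allI impI)
      fix j :: nat assume j: "j < 4"
      have "(transpose_mat M *\<^sub>v v) $ j = 0" using v(3) j by simp
      moreover have "(transpose_mat M *\<^sub>v v) $ j = (\<Sum>i<4. v $ i * h i j)"
        using j v(1) by (simp add: M_def mult_mat_vec_def scalar_prod_def atLeast0LessThan mult.commute)
      ultimately show "(\<Sum>i<4. v $ i * h i j) = 0" by simp
    qed
    then have "\<forall>i<4. v $ i = 0" using gp unfolding general_position4_def by blast
    then have "v = 0\<^sub>v 4" using v(1) by (intro eq_vecI) auto
    with v(2) show False by simp
  qed
  define Bm where "Bm = (\<lambda>a b. adj_mat M $$ (a, b) / det M)"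
  have adj1: "M * adj_mat M = det M \<cdot>\<^sub>m 1\<^sub>m 4" and adj2: "adj_mat M * M = det M \<cdot>\<^sub>m 1\<^sub>m 4"
    and adjc: "adj_mat M \<in> carrier_mat 4 4"
    using adj_mat[OF M] by auto
  have r1: "(\<Sum>c<4. h a c * Bm c b) = (if a = b then 1 else 0)" if "a < 4" "b < 4" for a b
  proof -
    have "(M * adj_mat M) $$ (a, b) = (\<Sum>c<4. h a c * adj_mat M $$ (c, b))"
      using that adjc by (simp add: M_def scalar_prod_def atLeast0LessThan)
    also have "(M * adj_mat M) $$ (a, b) = det M * (if a = b then 1 else 0)"
      using that by (simp add: adj1)
    finally have "(\<Sum>c<4. h a c * adj_mat M $$ (c, b)) = det M * (if a = b then 1 else 0)" by simp
    moreover have "(\<Sum>c<4. h a c * Bm c b) = (\<Sum>c<4. h a c * adj_mat M $$ (c, b)) / det M"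
      by (simp add: Bm_def sum_divide_distrib)
    ultimately show ?thesis using dM by simp
  qed
  have r2: "(\<Sum>c<4. Bm a c * h c b) = (if a = b then 1 else 0)" if "a < 4" "b < 4" for a b
  proof -
    have "(adj_mat M * M) $$ (a, b) = (\<Sum>c<4. adj_mat M $$ (a, c) * h c b)"
      using that adjc by (simp add: M_def scalar_prod_def atLeast0LessThan)
    also have "(adj_mat M * M) $$ (a, b) = det M * (if a = b then 1 else 0)"
      using that by (simp add: adj2)
    finally have "(\<Sum>c<4. adj_mat M $$ (a, c) * h c b) = det M * (if a = b then 1 else 0)" by simp
    moreover have "(\<Sum>c<4. Bm a c * h c b) = (\<Sum>c<4. adj_mat M $$ (a, c) * h c b) / det M"
      by (simp add: Bm_def sum_divide_distrib)
    ultimately show ?thesis using dM by simp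
  qed
  have eK: "Bm a b \<in> K" if "a < 4" "b < 4" for a b
  proof -
    have "adj_mat M $$ (a, b) = cofactor M b a" using that by (simp add: adj_mat_def M_def)
    also have "\<dots> = (-1) ^ (b + a) * det (mat_delete M b a)" by (simp add: cofactor_def)
    also have "\<dots> \<in> K"
    proof (intro sf_mult[OF sf] sf_pow[OF sf] sf_uminus[OF sf] sf_1[OF sf] det_in_K[OF sf])
      show "mat_delete M b a \<in> carrier_mat 3 3" using mat_delete_carrier[OF M] by simp
      fix a' b' :: nat assume "a' < 3" "b' < 3"
      then show "mat_delete M b a $$ (a', b') \<in> K" by (simp add: mat_delete_def M_def hK)
    qed
    finally show ?thesis unfolding Bm_def
      by (intro sf_divide[OF sf] det_in_K[OF sf M]) (auto simp: M_def hK)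
  qed
  show ?thesis using r1 r2 eK by blast
qed

lemma lin_B: "lin g (\<lambda>c. \<Sum>n<4. Bm c n * y n) = (\<Sum>n<4. (\<Sum>c<4. g c * Bm c n) * y n)"
  unfolding lin_def by (simp add: sum_distrib_left sum_distrib_right mult.assoc) (rule sum.swap)

lemma sum4:
  assumes S4: "{..<4::nat} = {i, j, k, n0}"
    and dist: "i \<noteq> j" "i \<noteq> k" "j \<noteq> k" "n0 \<noteq> i" "n0 \<noteq> j" "n0 \<noteq> k"
  shows "(\<Sum>n<4. f n) = f i + f j + f k + f n0"
  using dist by (simp add: S4 algebra_simps)

lemma minors_nonzero:
  fixes al be :: "nat \<Rightarrow> complex" and g1 g2 :: "nat \<Rightarrow> complex" and Hm :: "nat \<Rightarrow> nat \<Rightarrow> complex"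
  assumes S4: "{..<4::nat} = {i, j, k, n0}"
    and dist: "i \<noteq> j" "i \<noteq> k" "j \<noteq> k" "n0 \<noteq> i" "n0 \<noteq> j" "n0 \<noteq> k"
    and ind: "lin_indep2 g1 g2"
    and g1: "\<And>c. c < 4 \<Longrightarrow> g1 c = (\<Sum>n<4. al n * Hm n c)"
    and g2: "\<And>c. c < 4 \<Longrightarrow> g2 c = (\<Sum>n<4. be n * Hm n c)"
    and z: "al n0 = 0" "be n0 = 0"
  shows "al i * be j - al j * be i \<noteq> 0 \<or> al i * be k - al k * be i \<noteq> 0 \<or> al j * be k - al k * be j \<noteq> 0"
proof (rule ccontr)
  assume "\<not> ?thesis"
  then have d: "al i * be j - al j * be i = 0" "al i * be k - al k * be i = 0" "al j * be k - al k * be j = 0"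
    by auto
  have key: "\<exists>a b. (a \<noteq> 0 \<or> b \<noteq> 0) \<and> (\<forall>n<4. a * al n + b * be n = 0)"
  proof -
    have all4: "(\<forall>n<4. P n) \<longleftrightarrow> P i \<and> P j \<and> P k \<and> P n0" for P :: "nat \<Rightarrow> bool"
    proof -
      have "(\<forall>n<4. P n) = (\<forall>n\<in>{..<4::nat}. P n)" by auto
      also have "\<dots> = (\<forall>n\<in>{i, j, k, n0}. P n)" by (simp only: S4)
      finally show ?thesis by simp
    qed
    show ?thesis
    proof (cases "al i \<noteq> 0")
      case True
      then show ?thesis unfolding all4 using d z
        by (intro exI[of _ "be i"] exI[of _ "- al i"]) (auto simp: algebra_simps)
    next
      case Fi: False
      show ?thesis
      proof (cases "al j \<noteq> 0")
        case True
        then show ?thesis unfolding all4 using d z Fi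
          by (intro exI[of _ "be j"] exI[of _ "- al j"]) (auto simp: algebra_simps)
      next
        case Fj: False
        show ?thesis
        proof (cases "al k \<noteq> 0")
          case True
          then show ?thesis unfolding all4 using d z Fi Fj
            by (intro exI[of _ "be k"] exI[of _ "- al k"]) (auto simp: algebra_simps)
        next
          case False
          then show ?thesis unfolding all4 using z Fi Fj
            by (intro exI[of _ 1] exI[of _ 0]) auto
        qed
      qed
    qed
  qed
  then obtain a b where ab: "a \<noteq> 0 \<or> b \<noteq> 0" "\<And>n. n < 4 \<Longrightarrow> a * al n + b * be n = 0" by blast
  have "\<forall>c<4. a * g1 c + b * g2 c = 0"
  proof (intro allI impI)
    fix c :: nat assume c: "c < 4"
    have "a * g1 c + b * g2 c = (\<Sum>n<4. (a * al n + b * be n) * Hm n c)"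
      using c by (simp add: g1 g2 sum_distrib_left sum.distrib algebra_simps)
    also have "\<dots> = 0" using ab(2) by simp
    finally show "a * g1 c + b * g2 c = 0" .
  qed
  then have "a = 0 \<and> b = 0" using ind unfolding lin_indep2_def by blast
  with ab(1) show False by simp
qed

lemma lc_a:
  fixes ai aj ak bi bj bk u v :: complex
  assumes sf: "subfield_C K"
    and S: "ai \<in> S_integers K N" "aj \<in> S_integers K N" "ak \<in> S_integers K N"
           "bi \<in> S_integers K N" "bj \<in> S_integers K N" "bk \<in> S_integers K N"
    and d12: "ai * bj - aj * bi \<noteq> 0" "inverse (ai * bj - aj * bi) \<in> S_integers K N"
    and d23: "aj * bk - ak * bj = 0"
  shows "\<exists>A\<in>S_integers K N. \<exists>B\<in>S_integers K N.
           A * (ai + aj * u + ak * v) + B * (bi + bj * u + bk * v) = 1"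
proof (intro bexI)
  define D where "D = ai * bj - aj * bi"
  define G1 where "G1 = ai + aj * u + ak * v"
  define G2 where "G2 = bi + bj * u + bk * v"
  have E: "bj * G1 - aj * G2 = D - (aj * bk - ak * bj) * v"
    by (simp add: D_def G1_def G2_def algebra_simps)
  have "(bj * inverse D) * G1 + (- aj * inverse D) * G2 = (bj * G1 - aj * G2) * inverse D"
    by (simp add: algebra_simps)
  also have "\<dots> = D * inverse D" using E d23 by simp
  also have "\<dots> = 1" using d12(1) by (simp add: D_def)
  finally show "(bj * inverse D) * (ai + aj * u + ak * v) + (- aj * inverse D) * (bi + bj * u + bk * v) = 1"
    by (simp add: G1_def G2_def)
  show "bj * inverse D \<in> S_integers K N" unfolding D_def by (intro Sint_mult sf S d12)
  show "- aj * inverse D \<in> S_integers K N" unfolding D_def by (intro Sint_mult Sint_uminus sf S d12)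
qed

lemma lc_b:
  fixes ai aj ak bi bj bk u v :: complex
  assumes sf: "subfield_C K"
    and S: "ai \<in> S_integers K N" "aj \<in> S_integers K N" "ak \<in> S_integers K N"
           "bi \<in> S_integers K N" "bj \<in> S_integers K N" "bk \<in> S_integers K N"
    and d13: "ai * bk - ak * bi \<noteq> 0" "inverse (ai * bk - ak * bi) \<in> S_integers K N"
    and d23: "aj * bk - ak * bj = 0"
  shows "\<exists>A\<in>S_integers K N. \<exists>B\<in>S_integers K N.
           A * (ai + aj * u + ak * v) + B * (bi + bj * u + bk * v) = 1"
proof (intro bexI)
  define D where "D = ai * bk - ak * bi"
  define G1 where "G1 = ai + aj * u + ak * v"
  define G2 where "G2 = bi + bj * u + bk * v"
  have E: "bk * G1 - ak * G2 = D + (aj * bk - ak * bj) * u"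
    by (simp add: D_def G1_def G2_def algebra_simps)
  have "(bk * inverse D) * G1 + (- ak * inverse D) * G2 = (bk * G1 - ak * G2) * inverse D"
    by (simp add: algebra_simps)
  also have "\<dots> = D * inverse D" using E d23 by simp
  also have "\<dots> = 1" using d13(1) by (simp add: D_def)
  finally show "(bk * inverse D) * (ai + aj * u + ak * v) + (- ak * inverse D) * (bi + bj * u + bk * v) = 1"
    by (simp add: G1_def G2_def)
  show "bk * inverse D \<in> S_integers K N" unfolding D_def by (intro Sint_mult sf S d13)
  show "- ak * inverse D \<in> S_integers K N" unfolding D_def by (intro Sint_mult Sint_uminus sf S d13)
qed

lemma lc_c:
  fixes ai aj ak bi bj bk u v v0 \<rho> s :: complex
  assumes sf: "subfield_C K"
    and S: "ai \<in> S_integers K N" "aj \<in> S_integers K N" "ak \<in> S_integers K N"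
           "bi \<in> S_integers K N" "bj \<in> S_integers K N" "bk \<in> S_integers K N"
    and v0: "v0 \<in> S_integers K N" and s: "s \<in> S_integers K N"
    and kap: "(ai * bj - aj * bi) - (aj * bk - ak * bj) * v0 \<noteq> 0"
       "inverse ((ai * bj - aj * bi) - (aj * bk - ak * bj) * v0) \<in> S_integers K N"
    and v: "v = v0 * \<rho>" and rho: "\<rho> - 1 = ((ai * bk - ak * bi) + (aj * bk - ak * bj) * u) * s"
  shows "\<exists>A\<in>S_integers K N. \<exists>B\<in>S_integers K N.
           A * (ai + aj * u + ak * v) + B * (bi + bj * u + bk * v) = 1"
proof (intro bexI)
  define D12 where "D12 = ai * bj - aj * bi"
  define D13 where "D13 = ai * bk - ak * bi"
  define D23 where "D23 = aj * bk - ak * bj"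
  define k where "k = D12 - D23 * v0"
  define c where "c = D23 * v0 * s"
  define G1 where "G1 = ai + aj * u + ak * v"
  define G2 where "G2 = bi + bj * u + bk * v"
  have E2: "bj * G1 - aj * G2 = D12 - D23 * v" by (simp add: D12_def D23_def G1_def G2_def algebra_simps)
  have E3: "bk * G1 - ak * G2 = D13 + D23 * u" by (simp add: D13_def D23_def G1_def G2_def algebra_simps)
  have r: "D23 * v0 * (\<rho> - 1) = c * (D13 + D23 * u)"
    using rho by (simp add: c_def D13_def D23_def mult_ac)
  have e1: "D12 - D23 * v = k - D23 * v0 * (\<rho> - 1)" using v by (simp add: k_def algebra_simps)
  have "(bj + c * bk) * G1 + (- (aj + c * ak)) * G2 = (bj * G1 - aj * G2) + c * (bk * G1 - ak * G2)"
    by (simp add: algebra_simps)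
  also have "\<dots> = (D12 - D23 * v) + c * (D13 + D23 * u)" using E2 E3 by simp
  also have "\<dots> = k" using e1 r by simp
  finally have main: "(bj + c * bk) * G1 + (- (aj + c * ak)) * G2 = k" .
  have "((bj + c * bk) * inverse k) * G1 + ((- (aj + c * ak)) * inverse k) * G2
        = ((bj + c * bk) * G1 + (- (aj + c * ak)) * G2) * inverse k" by (simp add: algebra_simps)
  also have "\<dots> = 1" using main kap(1) by (simp add: k_def D12_def D23_def)
  finally show "((bj + c * bk) * inverse k) * (ai + aj * u + ak * v) + ((- (aj + c * ak)) * inverse k) * (bi + bj * u + bk * v) = 1"
    by (simp add: G1_def G2_def)
  have cS: "c \<in> S_integers K N" unfolding c_def D23_def by (intro Sint_mult Sint_diff sf S v0 s)
  have kS: "inverse k \<in> S_integers K N" using kap(2) by (simp add: k_def D12_def D23_def)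
  show "(bj + c * bk) * inverse k \<in> S_integers K N"
    by (intro Sint_mult Sint_add sf S cS kS)
  show "(- (aj + c * ak)) * inverse k \<in> S_integers K N"
    by (intro Sint_mult Sint_add Sint_uminus sf S cS kS)
qed

lemma inj_pow2: "inj (\<lambda>t::nat. (2::complex) ^ t)"
proof
  fix a b :: nat assume "(2::complex) ^ a = 2 ^ b"
  then have "of_nat (2 ^ a) = (of_nat (2 ^ b) :: complex)" by simp
  then have "(2::nat) ^ a = 2 ^ b" using of_nat_eq_iff by blast
  then show "a = b" by simp
qed

lemma finite_pow2_eq: "finite {t::nat. (2::complex) ^ t = z}"
proof -
  have "{t::nat. (2::complex) ^ t = z} = (\<lambda>t. (2::complex) ^ t) -` {z}" by auto
  then show ?thesis using finite_vimageI[OF _ inj_pow2, of "{z}"] by simp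
qed

theorem proposition4p3:
  fixes K :: "complex set"
    and h :: "nat \<Rightarrow> nat \<Rightarrow> complex"
    and p :: "nat \<Rightarrow> complex"
    and i j k r :: nat
    and g1 g2 :: "nat \<Rightarrow> nat \<Rightarrow> complex"
  assumes "number_field K"
    and "\<forall>m<4. coeffs_in K (h m)"
    and "general_position4 h"
    and "i < 4" and "j < 4" and "k < 4" and "i \<noteq> j" and "i \<noteq> k" and "j \<noteq> k"
    and "\<exists>t<4. p t \<noteq> 0"
    and "lin (h i) p = 0" and "lin (h j) p = 0" and "lin (h k) p = 0"
    and "\<forall>l<r. coeffs_in K (g1 l) \<and> coeffs_in K (g2 l) \<and> lin_indep2 (g1 l) (g2 l)"
    and "\<forall>l<r. lin (g1 l) p = 0 \<and> lin (g2 l) p = 0"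
  shows "potentially_dense K h r g1 g2"
proof -
  note nf = assms(1)
  have sf: "subfield_C K" using nf by (simp add: number_field_def)
  have ijk: "i < 4" "j < 4" "k < 4" "i \<noteq> j" "i \<noteq> k" "j \<noteq> k" using assms(4-9) by auto
  have hK: "\<And>a b. a < 4 \<Longrightarrow> b < 4 \<Longrightarrow> h a b \<in> K" using assms(2) by (simp add: coeffs_in_def)
  have g1K: "\<And>l c. l < r \<Longrightarrow> c < 4 \<Longrightarrow> g1 l c \<in> K"
    and g2K: "\<And>l c. l < r \<Longrightarrow> c < 4 \<Longrightarrow> g2 l c \<in> K"
    and ind: "\<And>l. l < r \<Longrightarrow> lin_indep2 (g1 l) (g2 l)"
    using assms(14) by (auto simp: coeffs_in_def)
  have gp0: "\<And>l. l < r \<Longrightarrow> lin (g1 l) p = 0" "\<And>l. l < r \<Longrightarrow> lin (g2 l) p = 0"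
    using assms(15) by auto
  have "\<exists>n0<4. n0 \<noteq> i \<and> n0 \<noteq> j \<and> n0 \<noteq> k"
  proof (rule ccontr)
    assume "\<not> (\<exists>n0<4. n0 \<noteq> i \<and> n0 \<noteq> j \<and> n0 \<noteq> k)"
    then have "{..<4::nat} \<subseteq> {i, j, k}" by auto
    then have "card {..<4::nat} \<le> card {i, j, k}" by (intro card_mono) auto
    also have "card {i, j, k} = 3" using ijk by simp
    finally show False by simp
  qed
  then obtain n0 where n0: "n0 < 4" "n0 \<noteq> i" "n0 \<noteq> j" "n0 \<noteq> k" by blast
  have dist: "i \<noteq> j" "i \<noteq> k" "j \<noteq> k" "n0 \<noteq> i" "n0 \<noteq> j" "n0 \<noteq> k" using ijk n0 by auto
  have S4: "{..<4::nat} = {i, j, k, n0}"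
  proof -
    have "{i, j, k, n0} = {..<4::nat}"
    proof (rule card_subset_eq)
      show "{i, j, k, n0} \<subseteq> {..<4::nat}" using ijk n0 by auto
      show "card {i, j, k, n0} = card {..<4::nat}" using dist by simp
    qed simp
    then show ?thesis by simp
  qed
  note s4 = sum4[OF S4 dist]
  obtain Bm where BK: "\<And>a b. a < 4 \<Longrightarrow> b < 4 \<Longrightarrow> Bm a b \<in> K"
    and HB: "\<And>a b. a < 4 \<Longrightarrow> b < 4 \<Longrightarrow> (\<Sum>c<4. h a c * Bm c b) = (if a = b then 1 else 0)"
    and BH: "\<And>a b. a < 4 \<Longrightarrow> b < 4 \<Longrightarrow> (\<Sum>c<4. Bm a c * h c b) = (if a = b then 1 else 0)"
    using inverse_matrix_K[OF sf hK assms(3)] by blast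
  define hp where "hp = lin (h n0) p"
  have linhp: "lin (h n) p = 0" if "n \<in> {i, j, k}" for n using that assms(11-13) by auto
  have pB: "p c = Bm c n0 * hp" if c: "c < 4" for c
  proof -
    have "p c = (\<Sum>b<4. (if c = b then 1 else 0) * p b)"
    proof -
      have "(\<Sum>b<4. (if c = b then 1 else 0) * p b) = (\<Sum>b<4. if b = c then p b else 0)"
        by (intro sum.cong) auto
      also have "\<dots> = p c" using c by simp
      finally show ?thesis by simp
    qed
    also have "\<dots> = (\<Sum>b<4. (\<Sum>n<4. Bm c n * h n b) * p b)"
      using c BH by (intro sum.cong) auto
    also have "\<dots> = (\<Sum>n<4. Bm c n * lin (h n) p)"
      unfolding lin_def by (simp add: sum_distrib_left sum_distrib_right mult.assoc) (rule sum.swap)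
    also have "\<dots> = Bm c n0 * hp" unfolding s4 using linhp by (simp add: hp_def)
    finally show ?thesis .
  qed
  have hp0: "hp \<noteq> 0"
  proof
    assume "hp = 0"
    then have "\<forall>t<4. p t = 0" using pB by simp
    with assms(10) show False by blast
  qed
  have formB: "(\<Sum>c<4. g c * Bm c n0) = 0" if "lin g p = 0" for g
  proof -
    have "lin g p = (\<Sum>c<4. g c * Bm c n0) * hp"
      unfolding lin_def by (simp add: pB sum_distrib_right mult.assoc)
    then show ?thesis using that hp0 by simp
  qed
  define al where "al = (\<lambda>l n. \<Sum>c<4. g1 l c * Bm c n)"
  define be where "be = (\<lambda>l n. \<Sum>c<4. g2 l c * Bm c n)"
  have al0: "al l n0 = 0" if "l < r" for l using formB[OF gp0(1)[OF that]] by (simp add: al_def)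
  have be0: "be l n0 = 0" if "l < r" for l using formB[OF gp0(2)[OF that]] by (simp add: be_def)
  have rep: "g c = (\<Sum>n<4. (\<Sum>c'<4. g c' * Bm c' n) * h n c)" if "c < 4" for g :: "nat \<Rightarrow> complex" and c
  proof -
    have "(\<Sum>n<4. (\<Sum>c'<4. g c' * Bm c' n) * h n c) = (\<Sum>c'<4. g c' * (\<Sum>n<4. Bm c' n * h n c))"
      by (simp add: sum_distrib_left sum_distrib_right mult.assoc) (rule sum.swap)
    also have "\<dots> = (\<Sum>c'<4. if c' = c then g c' else 0)"
      using that BH by (intro sum.cong) auto
    also have "\<dots> = g c" using that by simp
    finally show ?thesis by simp
  qed
  define D12 where "D12 = (\<lambda>l. al l i * be l j - al l j * be l i)"
  define D13 where "D13 = (\<lambda>l. al l i * be l k - al l k * be l i)"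
  define D23 where "D23 = (\<lambda>l. al l j * be l k - al l k * be l j)"
  have mnz: "D12 l \<noteq> 0 \<or> D13 l \<noteq> 0 \<or> D23 l \<noteq> 0" if l: "l < r" for l
    unfolding D12_def D13_def D23_def
  proof (rule minors_nonzero[OF S4 dist ind[OF l], where Hm = h])
    show "\<And>c. c < 4 \<Longrightarrow> g1 l c = (\<Sum>n<4. al l n * h n c)" unfolding al_def by (rule rep)
    show "\<And>c. c < 4 \<Longrightarrow> g2 l c = (\<Sum>n<4. be l n * h n c)" unfolding be_def by (rule rep)
    show "al l n0 = 0" "be l n0 = 0" using al0 be0 l by auto
  qed
  have alK: "al l n \<in> K" if "l < r" "n < 4" for l n
    unfolding al_def using that by (intro sf_sum[OF sf] sf_mult[OF sf] g1K BK) auto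
  have beK: "be l n \<in> K" if "l < r" "n < 4" for l n
    unfolding be_def using that by (intro sf_sum[OF sf] sf_mult[OF sf] g2K BK) auto
  have DK: "D12 l \<in> K" "D13 l \<in> K" "D23 l \<in> K" if "l < r" for l
    unfolding D12_def D13_def D23_def using that ijk
    by (intro sf_diff[OF sf] sf_mult[OF sf] alK beK; simp)+
  define bad where "bad = (\<Union>l\<in>{..<r}. {t::nat. (2::complex) ^ t = D12 l / D23 l})"
  have "finite bad" unfolding bad_def by (intro finite_UN_I finite_pow2_eq) auto
  then obtain t0 where t0: "t0 \<notin> bad" using ex_new_if_finite[OF infinite_UNIV_nat] by blast
  define v0 where "v0 = (2::complex) ^ t0"
  have kap: "D12 l - D23 l * v0 \<noteq> 0" if "l < r" "D23 l \<noteq> 0" for l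
  proof
    assume "D12 l - D23 l * v0 = 0"
    then have "(2::complex) ^ t0 = D12 l / D23 l" using that(2) by (simp add: v0_def field_simps)
    then have "t0 \<in> bad" using that(1) by (auto simp: bad_def)
    with t0 show False by simp
  qed
  have v0K: "v0 \<in> K" unfolding v0_def using sf_pow[OF sf sf_of_nat[OF sf, of 2]] by simp
  define X where "X = (\<lambda>(a,c). h a c) ` ({..<4}\<times>{..<4}) \<union> (\<lambda>(l,c). g1 l c) ` ({..<r}\<times>{..<4})
     \<union> (\<lambda>(l,c). g2 l c) ` ({..<r}\<times>{..<4}) \<union> (\<lambda>(a,c). Bm a c) ` ({..<4}\<times>{..<4})
     \<union> (\<lambda>l. inverse (D12 l)) ` {..<r} \<union> (\<lambda>l. inverse (D13 l)) ` {..<r}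
     \<union> (\<lambda>l. inverse (D12 l - D23 l * v0)) ` {..<r}"
  have "finite X" by (simp add: X_def)
  moreover have "X \<subseteq> K"
    unfolding X_def using hK g1K g2K BK DK v0K
    by (auto intro!: sf_inverse[OF sf] sf_diff[OF sf] sf_mult[OF sf])
  ultimately obtain N where N: "N > 0" "2 dvd N" "X \<subseteq> S_integers K N"
    using Sint_finite_set[OF nf] by blast
  define S where "S = S_integers K N"
  have hS: "h a c \<in> S" if "a < 4" "c < 4" for a c using that N(3) by (auto simp: X_def S_def)
  have g1S: "g1 l c \<in> S" if "l < r" "c < 4" for l c using that N(3) by (auto simp: X_def S_def)
  have g2S: "g2 l c \<in> S" if "l < r" "c < 4" for l c using that N(3) by (auto simp: X_def S_def)
  have BS: "Bm a c \<in> S" if "a < 4" "c < 4" for a c using that N(3) by (auto simp: X_def S_def)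
  have iD12: "inverse (D12 l) \<in> S" if "l < r" for l using that N(3) by (auto simp: X_def S_def)
  have iD13: "inverse (D13 l) \<in> S" if "l < r" for l using that N(3) by (auto simp: X_def S_def)
  have ikap: "inverse (D12 l - D23 l * v0) \<in> S" if "l < r" for l using that N(3) by (auto simp: X_def S_def)
  have alS: "al l n \<in> S" if "l < r" "n < 4" for l n
    unfolding al_def S_def using that by (intro Sint_sum[OF sf] Sint_mult[OF sf] g1S[unfolded S_def] BS[unfolded S_def]) auto
  have beS: "be l n \<in> S" if "l < r" "n < 4" for l n
    unfolding be_def S_def using that by (intro Sint_sum[OF sf] Sint_mult[OF sf] g2S[unfolded S_def] BS[unfolded S_def]) auto
  have p2S: "(2::complex) ^ a \<in> S" for a
    unfolding S_def using Sint_of_nat[OF sf, of "2 ^ a"] by simp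
  have v0S: "v0 \<in> S" unfolding v0_def by (rule p2S)
  define P2 where "P2 = range (\<lambda>a::nat. (2::complex) ^ a)"
  define Lb where "Lb = {l. l < r \<and> D23 l \<noteq> 0}"
  define U where "U = P2 - (\<Union>l\<in>Lb. {- D13 l / D23 l})"
  have finLb: "finite Lb" by (simp add: Lb_def)
  have infP2: "infinite P2" unfolding P2_def using inj_pow2 by (simp add: infinite_iff_countable_subset range_inj_infinite)
  have infU: "infinite U" unfolding U_def using infP2 finLb by (intro Diff_infinite_finite) auto
  define m where "m = (\<lambda>u. \<Prod>l\<in>Lb. D13 l + D23 l * u)"
  have fac_nz: "D13 l + D23 l * u \<noteq> 0" if "u \<in> U" "l \<in> Lb" for u l
  proof
    assume "D13 l + D23 l * u = 0"
    moreover have "D23 l \<noteq> 0" using that(2) by (simp add: Lb_def)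
    ultimately have "u = - D13 l / D23 l" by (simp add: field_simps add_eq_0_iff)
    then show False using that by (auto simp: U_def)
  qed
  have uS: "u \<in> S" if "u \<in> U" for u using that p2S by (auto simp: U_def P2_def)
  have D13S: "D13 l \<in> S" and D23S: "D23 l \<in> S" and D12S: "D12 l \<in> S" if "l < r" for l
    unfolding D12_def D13_def D23_def S_def using that ijk
    by (intro Sint_diff[OF sf] Sint_mult[OF sf] alS[unfolded S_def] beS[unfolded S_def]; simp)+
  have mS: "m u \<in> S" if "u \<in> U" for u
    unfolding m_def S_def using that
    by (intro Sint_prod[OF sf] Sint_add[OF sf] Sint_mult[OF sf] D13S[unfolded S_def] D23S[unfolded S_def] uS[unfolded S_def])
       (auto simp: Lb_def)
  have m0: "m u \<noteq> 0" if "u \<in> U" for u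
    unfolding m_def using fac_nz[OF that] finLb by simp
  have "\<forall>u\<in>U. \<exists>e>0. \<forall>k'. ((2::complex) ^ (e * k') - 1) / m u \<in> S"
  proof
    fix u assume u: "u \<in> U"
    obtain n where n: "n \<noteq> 0" "of_int n / m u \<in> S"
      using Sint_norm[OF sf mS[OF u, unfolded S_def] m0[OF u] N(1)] by (auto simp: S_def)
    obtain e where e: "e > 0" "\<And>k'. ((2::complex) ^ (e * k') - 1) / of_int n \<in> S"
      using Sint_pow2_minus1[OF sf N(2) n(1)] by (auto simp: S_def)
    have "((2::complex) ^ (e * k') - 1) / m u = (((2::complex) ^ (e * k') - 1) / of_int n) * (of_int n / m u)" for k'
      using n(1) by simp
    then have "((2::complex) ^ (e * k') - 1) / m u \<in> S" for k'
      using e(2) n(2) by (simp only: S_def) (rule Sint_mult[OF sf]; simp add: S_def)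
    then show "\<exists>e>0. \<forall>k'. ((2::complex) ^ (e * k') - 1) / m u \<in> S" using e(1) by blast
  qed
  then obtain E where E: "\<And>u. u \<in> U \<Longrightarrow> E u > 0"
    "\<And>u k'. u \<in> U \<Longrightarrow> ((2::complex) ^ (E u * k') - 1) / m u \<in> S"
    by metis
  define V where "V = (\<lambda>u. range (\<lambda>k'::nat. v0 * (2::complex) ^ (E u * k')))"
  have infV: "infinite (V u)" if "u \<in> U" for u
  proof -
    have "inj (\<lambda>k'::nat. v0 * (2::complex) ^ (E u * k'))"
    proof
      fix a b :: nat assume "v0 * (2::complex) ^ (E u * a) = v0 * 2 ^ (E u * b)"
      then have "(2::complex) ^ (E u * a) = 2 ^ (E u * b)" by (simp add: v0_def)
      then have "E u * a = E u * b" using inj_pow2 by (auto dest: injD)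
      then show "a = b" using E(1)[OF that] by simp
    qed
    then show ?thesis unfolding V_def by (rule range_inj_infinite)
  qed
  have pts: "(\<lambda>c. \<Sum>n<4. Bm c n * yv i j k n0 w u v n) \<in> {x. integral_point K N h r g1 g2 x}"
    if w: "w \<in> P2" and u: "u \<in> U" and v: "v \<in> V u" for w u v
  proof -
    obtain a0 where a0: "w = 2 ^ a0" using w by (auto simp: P2_def)
    obtain a1 where a1: "u = 2 ^ a1" using u by (auto simp: U_def P2_def)
    obtain k' where k': "v = v0 * 2 ^ (E u * k')" using v by (auto simp: V_def)
    define y where "y = yv i j k n0 w u v"
    define x where "x = (\<lambda>c. \<Sum>n<4. Bm c n * y n)"
    have yi: "y i = 1" and yj: "y j = u" and yk: "y k = v" and yn0: "y n0 = w"
      using dist by (auto simp: y_def yv_def)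
    have vpow: "v = 2 ^ (t0 + E u * k')" by (simp add: k' v0_def power_add)
    have yS: "y n \<in> S" for n
      unfolding y_def yv_def using uS[OF u] p2S[of a0] p2S[of "t0 + E u * k'"] a0 vpow
      by (auto simp: S_def Sint_1[OF sf] Sint_0[OF sf])
    have xS: "x c \<in> S" if "c < 4" for c
      unfolding x_def S_def using that
      by (intro Sint_sum[OF sf] Sint_mult[OF sf] BS[unfolded S_def] yS[unfolded S_def]) auto
    have linh: "lin (h a) x = y a" if a: "a < 4" for a
    proof -
      have "lin (h a) x = (\<Sum>n<4. (\<Sum>c<4. h a c * Bm c n) * y n)" unfolding x_def by (rule lin_B)
      also have "\<dots> = (\<Sum>n<4. if n = a then y n else 0)" using a HB by (intro sum.cong) auto
      also have "\<dots> = y a" using a by simp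
      finally show ?thesis .
    qed
    have ling1: "lin (g1 l) x = al l i + al l j * u + al l k * v" if "l < r" for l
    proof -
      have "lin (g1 l) x = (\<Sum>n<4. al l n * y n)" unfolding x_def al_def by (rule lin_B)
      also have "\<dots> = al l i + al l j * u + al l k * v" unfolding s4 using al0[OF that] yi yj yk by simp
      finally show ?thesis .
    qed
    have ling2: "lin (g2 l) x = be l i + be l j * u + be l k * v" if "l < r" for l
    proof -
      have "lin (g2 l) x = (\<Sum>n<4. be l n * y n)" unfolding x_def be_def by (rule lin_B)
      also have "\<dots> = be l i + be l j * u + be l k * v" unfolding s4 using be0[OF that] yi yj yk by simp
      finally show ?thesis .
    qed
    have units: "S_unit K N (lin (h a) x)" if a: "a < 4" for a
    proof -
      have "a \<in> {i, j, k, n0}" using a S4 by auto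
      then have "\<exists>t. y a = 2 ^ t" using yi yj yk yn0 a0 a1 vpow
        by (auto intro: exI[of _ "0::nat"])
      then obtain t where "y a = 2 ^ t" by blast
      then show ?thesis using linh[OF a] Sunit_pow2[OF sf N(2), of t] by simp
    qed
    have unimod: "\<exists>a. (\<forall>j<4. a j \<in> S_integers K N) \<and> (\<Sum>j<4. a j * x j) = 1"
    proof (intro exI conjI allI impI)
      show "h i c \<in> S_integers K N" if "c < 4" for c using hS[OF ijk(1) that] by (simp add: S_def)
      show "(\<Sum>c<4. h i c * x c) = 1" using linh[OF ijk(1)] yi by (simp add: lin_def)
    qed
    have lines: "\<exists>A\<in>S_integers K N. \<exists>B\<in>S_integers K N. A * lin (g1 l) x + B * lin (g2 l) x = 1"
      if l: "l < r" for l
    proof -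
      note Sl = alS[OF l ijk(1), unfolded S_def] alS[OF l ijk(2), unfolded S_def] alS[OF l ijk(3), unfolded S_def]
        beS[OF l ijk(1), unfolded S_def] beS[OF l ijk(2), unfolded S_def] beS[OF l ijk(3), unfolded S_def]
      show ?thesis
      proof (cases "D23 l = 0")
        case True
        show ?thesis
        proof (cases "D12 l = 0")
          case False
          show ?thesis unfolding ling1[OF l] ling2[OF l]
            by (rule lc_a[OF sf Sl]) (use False True iD12[OF l] in \<open>simp_all add: D12_def D23_def S_def\<close>)
        next
          case z12: True
          have n13: "D13 l \<noteq> 0" using mnz[OF l] True z12 by simp
          show ?thesis unfolding ling1[OF l] ling2[OF l]
            by (rule lc_b[OF sf Sl]) (use n13 True iD13[OF l] in \<open>simp_all add: D13_def D23_def S_def\<close>)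
        qed
      next
        case False
        then have lLb: "l \<in> Lb" using l by (simp add: Lb_def)
        define \<rho> where "\<rho> = (2::complex) ^ (E u * k')"
        define s where "s = ((\<rho> - 1) / m u) * (\<Prod>l'\<in>Lb - {l}. D13 l' + D23 l' * u)"
        have mu: "m u = (D13 l + D23 l * u) * (\<Prod>l'\<in>Lb - {l}. D13 l' + D23 l' * u)"
          unfolding m_def using finLb lLb by (simp add: prod.remove)
        have rho: "\<rho> - 1 = (D13 l + D23 l * u) * s"
          using m0[OF u] by (simp add: s_def mu)
        have sS: "s \<in> S_integers K N"
          unfolding s_def using E(2)[OF u, of k']
          by (intro Sint_mult[OF sf] Sint_prod[OF sf] Sint_add[OF sf] Sint_mult[OF sf]
                D13S[unfolded S_def] D23S[unfolded S_def] uS[OF u, unfolded S_def])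
             (auto simp: \<rho>_def S_def Lb_def)
        show ?thesis unfolding ling1[OF l] ling2[OF l]
          by (rule lc_c[OF sf Sl v0S[unfolded S_def] sS])
             (use kap[OF l False] ikap[OF l] rho k' in \<open>simp_all add: D12_def D13_def D23_def S_def \<rho>_def\<close>)
      qed
    qed
    have "integral_point K N h r g1 g2 x"
      unfolding integral_point_def using xS unimod units lines by (auto simp: S_def)
    then show ?thesis by (simp add: x_def y_def)
  qed
  show ?thesis
    unfolding potentially_dense_def
  proof (intro exI conjI)
    show "number_field K" by (rule nf)
    show "K \<subseteq> K" by simp
    show "1 \<le> N" using N(1) by simp
    show "\<forall>a<4. coeffs_in (S_integers K N) (h a)" using hS by (simp add: coeffs_in_def S_def)
    show "\<forall>l<r. coeffs_in (S_integers K N) (g1 l) \<and> coeffs_in (S_integers K N) (g2 l)"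
      using g1S g2S by (simp add: coeffs_in_def S_def)
    show "zariski_dense_P3 {x. integral_point K N h r g1 g2 x}"
      by (rule density[OF BH S4 dist infP2 infU infV pts])
  qed
qed

end
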